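(* Let $A=(a,b,c,d)$ with $a,b,c,d\in\mathbb{R}$, $ad-bc=1$, $b\neq 0$, let $d'\in\mathbb{R}$ be arbitrary and set $A_1=(0,b,-\tfrac1b,d')$. Let $f,g\in L^2(\mathbb{R})$. Then for all $(t,u)\in\mathbb{R}^2$, $$S^{A}_{g}f(t,u)=\int_{-\infty}^{+\infty}L_A^{f}(\xi)\,G^{*}(\xi\mid u,t)\,d\xi,$$ where $$G^{*}(\xi\mid u,t)=\sqrt{-i2\pi b}\;e^{i\frac{d'}{2b}(\xi-u)^2}\,\overline{L_{A_1}^{g}(\xi-u)}\;K_A(t,u)\,\overline{K_A(t,\xi)} .$$
   Context: For a real matrix parameter $M=(a,b,c,d)$ with $ad-bc=1$ and $b\neq0$, the linear canonical transform (LCT) of $h\in L^2(\mathbb{R})$ is $L_M^{h}(u)=\int_{-\infty}^{+\infty}h(t)K_M(t,u)\,dt$ with kernel $K_M(t,u)=\frac{1}{\sqrt{i2\pi b}}\exp\!\big(i\frac{a}{2b}t^2-i\frac{1}{b}tu+i\frac{d}{2b}u^2\big)$ (principal branch of the square root; extended to $L^2$ by unitarity). The inverse is $h(t)=\int L_M^h(u)K_{M^{-1}}(u,t)\,du$ with $M^{-1}=(d,-b,-c,a)$ and $K_{M^{-1}}(u,t)=\overline{K_M(t,u)}$. For a window $g\in L^2(\mathbb{R})$, the short-time linear canonical transform (STLCT) of $f\in L^2(\mathbb{R})$ is $S^{A}_{g}f(t,u)=\int_{-\infty}^{+\infty}f(\tau)\overline{g(\tau-t)}K_A(\tau,u)\,d\tau$.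 A bar or superscript $*$ denotes complex conjugation. *)

theory Defs
  imports "HOL-Analysis.Analysis"
begin

text \<open>A real parameter matrix M = (a,b,c,d) is represented as a 4-tuple.\<close>
type_synonym lct_param = "real \<times> real \<times> real \<times> real"

definition sq_integrable :: "(real \<Rightarrow> complex) \<Rightarrow> bool" where
  "sq_integrable h \<longleftrightarrow> h \<in> borel_measurable lborel \<and>
     integrable lborel (\<lambda>x. (cmod (h x))\<^sup>2)"

definition lct_kernel :: "lct_param \<Rightarrow> real \<Rightarrow> real \<Rightarrow> complex" where
  "lct_kernel M t u = (case M of (a, b, c, d) \<Rightarrow>
     (1 / csqrt (\<i> * 2 * complex_of_real pi * complex_of_real b)) *
     exp (\<i> * complex_of_real (a / (2 * b) * t\<^sup>2 - (1 / b) * t * u + d / (2 * b) * u\<^sup>2)))"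

text \<open>Truncated LCT integral over [-N,N] (absolutely convergent for h in L^2).\<close>
definition lct_trunc :: "lct_param \<Rightarrow> (real \<Rightarrow> complex) \<Rightarrow> nat \<Rightarrow> real \<Rightarrow> complex" where
  "lct_trunc M h N u = (LINT t:{- real N..real N}|lborel. h t * lct_kernel M t u)"

text \<open>F is (a representative of) the LCT L_M^h of h in L^2: the L^2 extension of the
  integral transform, obtained as the L^2 limit of the truncated integrals.\<close>
definition is_LCT :: "lct_param \<Rightarrow> (real \<Rightarrow> complex) \<Rightarrow> (real \<Rightarrow> complex) \<Rightarrow> bool" where
  "is_LCT M h F \<longleftrightarrow> sq_integrable F \<and>
     ((\<lambda>N. \<integral>\<^sup>+ u. ennreal ((cmod (lct_trunc M h N u - F u))\<^sup>2) \<partial>lborel) \<longlonglongrightarrow> 0)"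

definition stlct :: "lct_param \<Rightarrow> (real \<Rightarrow> complex) \<Rightarrow> (real \<Rightarrow> complex) \<Rightarrow> real \<Rightarrow> real \<Rightarrow> complex" where
  "stlct A g f t u = (LINT \<tau>|lborel. f \<tau> * cnj (g (\<tau> - t)) * lct_kernel A \<tau> u)"

end

theory Submission
  imports Defs "HOL-Probability.Probability"
begin

lemma borel_measurable_cnj'[measurable]: "(cnj :: complex \<Rightarrow> complex) \<in> borel_measurable borel"
  by (intro borel_measurable_continuous_onI continuous_on_cnj continuous_on_id)

definition nsq :: "(real \<Rightarrow> complex) \<Rightarrow> real" where
  "nsq u = (LINT x|lborel. (cmod (u x))\<^sup>2)"

lemma sqi_meas: "sq_integrable u \<Longrightarrow> u \<in> borel_measurable borel"
  by (simp add: sq_integrable_def)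

lemma sqi_int: "sq_integrable u \<Longrightarrow> integrable lborel (\<lambda>x. (cmod (u x))\<^sup>2)"
  by (simp add: sq_integrable_def)

lemma nsq_nonneg: "nsq u \<ge> 0"
  unfolding nsq_def by (rule integral_nonneg_AE) auto

lemma sqi_prod_int:
  assumes "sq_integrable u" "sq_integrable v"
  shows "integrable lborel (\<lambda>x. u x * cnj (v x))"
proof (rule Bochner_Integration.integrable_bound)
  show "integrable lborel (\<lambda>x. (cmod (u x))\<^sup>2 + (cmod (v x))\<^sup>2)"
    using assms by (auto simp: sq_integrable_def)
  have [measurable]: "u \<in> borel_measurable borel" "v \<in> borel_measurable borel" using assms by (auto simp: sqi_meas)
  show "(\<lambda>x. u x * cnj (v x)) \<in> borel_measurable lborel" by measurable
  show "AE x in lborel. norm (u x * cnj (v x)) \<le> norm ((cmod (u x))\<^sup>2 + (cmod (v x))\<^sup>2)"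
  proof (rule AE_I2)
    fix x
    have "cmod (u x) * cmod (v x) \<le> (cmod (u x))\<^sup>2 + (cmod (v x))\<^sup>2"
    proof -
      have "0 \<le> (cmod (u x) - cmod (v x))\<^sup>2" by simp
      then show ?thesis unfolding power2_eq_square
        by (simp add: algebra_simps) (smt (verit) mult_nonneg_nonneg norm_ge_zero)
    qed
    then show "norm (u x * cnj (v x)) \<le> norm ((cmod (u x))\<^sup>2 + (cmod (v x))\<^sup>2)"
      by (simp add: norm_mult)
  qed
qed

lemma sqi_abs_prod_int:
  assumes "sq_integrable u" "sq_integrable v"
  shows "integrable lborel (\<lambda>x. cmod (u x) * cmod (v x))"
  using integrable_norm[OF sqi_prod_int[OF assms]] by (simp add: norm_mult)

lemma CS_real:
  assumes "sq_integrable u" "sq_integrable v"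
  shows "(LINT x|lborel. cmod (u x) * cmod (v x))\<^sup>2 \<le> nsq u * nsq v"
proof -
  have m[measurable]: "u \<in> borel_measurable borel" "v \<in> borel_measurable borel" using assms by (auto simp: sqi_meas)
  have "(\<integral>\<^sup>+x. ennreal (cmod (u x)) * ennreal (cmod (v x)) \<partial>lborel)\<^sup>2 \<le>
     (\<integral>\<^sup>+x. ennreal (cmod (u x)) ^ 2 \<partial>lborel) * (\<integral>\<^sup>+x. ennreal (cmod (v x)) ^ 2 \<partial>lborel)"
    by (rule Cauchy_Schwarz_nn_integral) auto
  also have "(\<integral>\<^sup>+x. ennreal (cmod (u x)) * ennreal (cmod (v x)) \<partial>lborel)
      = ennreal (LINT x|lborel. cmod (u x) * cmod (v x))"
    using sqi_abs_prod_int[OF assms]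
    by (subst nn_integral_eq_integral[symmetric]) (auto simp: ennreal_mult)
  also have "(\<integral>\<^sup>+x. ennreal (cmod (u x)) ^ 2 \<partial>lborel) = ennreal (nsq u)"
    unfolding nsq_def using sqi_int[OF assms(1)]
    by (subst nn_integral_eq_integral[symmetric]) (auto simp: ennreal_power)
  also have "(\<integral>\<^sup>+x. ennreal (cmod (v x)) ^ 2 \<partial>lborel) = ennreal (nsq v)"
    unfolding nsq_def using sqi_int[OF assms(2)]
    by (subst nn_integral_eq_integral[symmetric]) (auto simp: ennreal_power)
  finally have *: "ennreal (LINT x|lborel. cmod (u x) * cmod (v x)) ^ 2 \<le> ennreal (nsq u) * ennreal (nsq v)" .
  have I: "(LINT x|lborel. cmod (u x) * cmod (v x)) \<ge> 0" by (rule integral_nonneg_AE) auto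
  have "ennreal ((LINT x|lborel. cmod (u x) * cmod (v x)) ^ 2) \<le> ennreal (nsq u * nsq v)"
    using * I nsq_nonneg[of u] nsq_nonneg[of v] by (simp only: ennreal_power ennreal_mult)
  then show ?thesis
    using nsq_nonneg[of u] nsq_nonneg[of v] by (simp add: ennreal_le_iff)
qed

lemma CS:
  assumes "sq_integrable u" "sq_integrable v"
  shows "(cmod (LINT x|lborel. u x * cnj (v x)))\<^sup>2 \<le> nsq u * nsq v"
proof -
  have "cmod (LINT x|lborel. u x * cnj (v x)) \<le> (LINT x|lborel. cmod (u x * cnj (v x)))"
    by (rule integral_norm_bound)
  also have "\<dots> = (LINT x|lborel. cmod (u x) * cmod (v x))" by (simp add: norm_mult)
  finally have "(cmod (LINT x|lborel. u x * cnj (v x)))\<^sup>2 \<le> (LINT x|lborel. cmod (u x) * cmod (v x))\<^sup>2"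
    by (intro power_mono) auto
  with CS_real[OF assms] show ?thesis by linarith
qed

lemma sq_add_le: "(cmod (a + b))\<^sup>2 \<le> 2 * (cmod a)\<^sup>2 + 2 * (cmod b)\<^sup>2"
proof -
  have "cmod (a + b) \<le> cmod a + cmod b" by (rule norm_triangle_ineq)
  then have "(cmod (a + b))\<^sup>2 \<le> (cmod a + cmod b)\<^sup>2" by (intro power_mono) auto
  also have "\<dots> \<le> 2 * (cmod a)\<^sup>2 + 2 * (cmod b)\<^sup>2"
    using sum_squares_bound[of "cmod a" "cmod b"] by (simp add: power2_eq_square algebra_simps)
  finally show ?thesis .
qed

lemma sqi_add:
  assumes "sq_integrable a" "sq_integrable b"
  shows "sq_integrable (\<lambda>x. a x + b x)"
  unfolding sq_integrable_def
proof
  have [measurable]: "a \<in> borel_measurable borel" "b \<in> borel_measurable borel" using assms by (auto simp: sqi_meas)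
  show "(\<lambda>x. a x + b x) \<in> borel_measurable lborel" by measurable
  show "integrable lborel (\<lambda>x. (cmod (a x + b x))\<^sup>2)"
  proof (rule Bochner_Integration.integrable_bound)
    show "integrable lborel (\<lambda>x. 2 * (cmod (a x))\<^sup>2 + 2 * (cmod (b x))\<^sup>2)"
      using assms by (auto simp: sq_integrable_def)
    show "(\<lambda>x. (cmod (a x + b x))\<^sup>2) \<in> borel_measurable lborel" by measurable
    show "AE x in lborel. norm ((cmod (a x + b x))\<^sup>2) \<le> norm (2 * (cmod (a x))\<^sup>2 + 2 * (cmod (b x))\<^sup>2)"
      using sq_add_le by auto
  qed
qed

lemma sqi_bmult:
  assumes "sq_integrable a" "h \<in> borel_measurable borel" "\<And>x. cmod (h x) \<le> B"
  shows "sq_integrable (\<lambda>x. h x * a x)"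
  unfolding sq_integrable_def
proof
  have [measurable]: "a \<in> borel_measurable borel" "h \<in> borel_measurable borel" using assms by (auto simp: sqi_meas)
  show "(\<lambda>x. h x * a x) \<in> borel_measurable lborel" by measurable
  show "integrable lborel (\<lambda>x. (cmod (h x * a x))\<^sup>2)"
  proof (rule Bochner_Integration.integrable_bound)
    show "integrable lborel (\<lambda>x. B\<^sup>2 * (cmod (a x))\<^sup>2)"
      using assms by (auto simp: sq_integrable_def)
    show "(\<lambda>x. (cmod (h x * a x))\<^sup>2) \<in> borel_measurable lborel" by measurable
    show "AE x in lborel. norm ((cmod (h x * a x))\<^sup>2) \<le> norm (B\<^sup>2 * (cmod (a x))\<^sup>2)"
    proof (rule AE_I2)
      fix x
      have "cmod (h x) * cmod (a x) \<le> B * cmod (a x)" using assms(3)[of x] by (simp add: mult_right_mono)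
      then have "(cmod (h x) * cmod (a x))\<^sup>2 \<le> (B * cmod (a x))\<^sup>2" by (intro power_mono) auto
      then show "norm ((cmod (h x * a x))\<^sup>2) \<le> norm (B\<^sup>2 * (cmod (a x))\<^sup>2)"
        by (simp add: norm_mult power_mult_distrib)
    qed
  qed
qed

lemma sqi_cmult: "sq_integrable a \<Longrightarrow> sq_integrable (\<lambda>x. c * a x)"
  using sqi_bmult[of a "\<lambda>_. c" "cmod c"] by auto

lemma sqi_neg: "sq_integrable a \<Longrightarrow> sq_integrable (\<lambda>x. - a x)"
  using sqi_cmult[of a "-1"] by simp

lemma sqi_diff: "sq_integrable a \<Longrightarrow> sq_integrable b \<Longrightarrow> sq_integrable (\<lambda>x. a x - b x)"
  using sqi_add[of a "\<lambda>x. - b x"] sqi_neg[of b] by simp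

lemma sqi_zero: "sq_integrable (\<lambda>x. 0)"
  by (simp add: sq_integrable_def)

lemma sqi_cnj: "sq_integrable a \<Longrightarrow> sq_integrable (\<lambda>x. cnj (a x))"
  by (auto simp: sq_integrable_def sqi_meas[unfolded sq_integrable_def])

lemma lborel_shift_integral:
  fixes f :: "real \<Rightarrow> 'a::{banach, second_countable_topology}"
  shows "(LINT x|lborel. f (x + z)) = (LINT x|lborel. f x)"
  using lborel_integral_real_affine[of 1 f z] by (simp add: add.commute)

lemma lborel_shift_integrable:
  fixes f :: "real \<Rightarrow> 'a::{banach, second_countable_topology}"
  shows "integrable lborel (\<lambda>x. f (x + z)) \<longleftrightarrow> integrable lborel f"
  using lborel_integrable_real_affine_iff[of 1 f z] by (simp add: add.commute)

lemma lborel_shift_nn_integral: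
  fixes f :: "real \<Rightarrow> ennreal"
  assumes [measurable]: "f \<in> borel_measurable borel"
  shows "(\<integral>\<^sup>+x. f (x + z) \<partial>lborel) = (\<integral>\<^sup>+x. f x \<partial>lborel)"
  using nn_integral_real_affine[of f 1 z] by (simp add: add.commute)

lemma sqi_shift: "sq_integrable a \<Longrightarrow> sq_integrable (\<lambda>x. a (x + z))"
  unfolding sq_integrable_def
proof (intro conjI)
  assume a: "a \<in> borel_measurable lborel \<and> integrable lborel (\<lambda>x. (cmod (a x))\<^sup>2)"
  then have [measurable]: "a \<in> borel_measurable borel" by simp
  show "(\<lambda>x. a (x + z)) \<in> borel_measurable lborel" by measurable
  show "integrable lborel (\<lambda>x. (cmod (a (x + z)))\<^sup>2)"
    using a lborel_shift_integrable[of "\<lambda>x. (cmod (a x))\<^sup>2" z] by simp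
qed

lemma nsq_shift: "nsq (\<lambda>x. a (x + z)) = nsq a"
  unfolding nsq_def using lborel_shift_integral[of "\<lambda>x. (cmod (a x))\<^sup>2" z] by simp

lemma nsq_cmult: "nsq (\<lambda>x. c * a x) = (cmod c)\<^sup>2 * nsq a"
  unfolding nsq_def by (simp add: norm_mult power_mult_distrib)

lemma nsq_le:
  assumes "integrable lborel g" "\<And>x. (cmod (a x))\<^sup>2 \<le> g x" "a \<in> borel_measurable borel"
  shows "nsq a \<le> (LINT x|lborel. g x)"
proof -
  have [measurable]: "a \<in> borel_measurable borel" by fact
  have "integrable lborel (\<lambda>x. (cmod (a x))\<^sup>2)"
    by (rule Bochner_Integration.integrable_bound[OF assms(1)]) (use assms(2) in \<open>auto intro!: AE_I2 intro: order_trans[OF _ abs_ge_self]\<close>)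
  then show ?thesis unfolding nsq_def using assms by (intro integral_mono) auto
qed

lemma nsq_add_le:
  assumes "sq_integrable a" "sq_integrable b"
  shows "nsq (\<lambda>x. a x + b x) \<le> 2 * nsq a + 2 * nsq b"
proof -
  have [measurable]: "a \<in> borel_measurable borel" "b \<in> borel_measurable borel" using assms by (auto simp: sqi_meas)
  have "nsq (\<lambda>x. a x + b x) \<le> (LINT x|lborel. 2 * (cmod (a x))\<^sup>2 + 2 * (cmod (b x))\<^sup>2)"
    by (rule nsq_le) (use assms sq_add_le in \<open>auto simp: sq_integrable_def\<close>)
  also have "\<dots> = 2 * nsq a + 2 * nsq b"
    using assms unfolding nsq_def by (simp add: sq_integrable_def)
  finally show ?thesis .
qed

definition TC :: "(real \<Rightarrow> complex) \<Rightarrow> bool" where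
  "TC u \<longleftrightarrow> sq_integrable u \<and> (\<forall>e>0. \<exists>d>0. \<forall>z. \<bar>z\<bar> < d \<longrightarrow> nsq (\<lambda>x. u (x + z) - u x) \<le> e)"

lemma TC_add:
  assumes "TC a" "TC b" shows "TC (\<lambda>x. a x + b x)"
  unfolding TC_def
proof (intro conjI allI impI)
  have sa: "sq_integrable a" and sb: "sq_integrable b" using assms by (auto simp: TC_def)
  show "sq_integrable (\<lambda>x. a x + b x)" using sa sb by (rule sqi_add)
  fix e :: real assume e: "e > 0"
  obtain d1 where d1: "d1 > 0" "\<And>z. \<bar>z\<bar> < d1 \<Longrightarrow> nsq (\<lambda>x. a (x + z) - a x) \<le> e/4"
    using assms(1) e unfolding TC_def by (meson divide_pos_pos zero_less_numeral)
  obtain d2 where d2: "d2 > 0" "\<And>z. \<bar>z\<bar> < d2 \<Longrightarrow> nsq (\<lambda>x. b (x + z) - b x) \<le> e/4"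
    using assms(2) e unfolding TC_def by (meson divide_pos_pos zero_less_numeral)
  show "\<exists>d>0. \<forall>z. \<bar>z\<bar> < d \<longrightarrow> nsq (\<lambda>x. a (x + z) + b (x + z) - (a x + b x)) \<le> e"
  proof (intro exI[of _ "min d1 d2"] conjI allI impI)
    show "min d1 d2 > 0" using d1 d2 by simp
    fix z assume z: "\<bar>z\<bar> < min d1 d2"
    have "nsq (\<lambda>x. a (x + z) + b (x + z) - (a x + b x))
        = nsq (\<lambda>x. (a (x + z) - a x) + (b (x + z) - b x))" by (simp add: algebra_simps)
    also have "\<dots> \<le> 2 * nsq (\<lambda>x. a (x + z) - a x) + 2 * nsq (\<lambda>x. b (x + z) - b x)"
      by (intro nsq_add_le sqi_diff sqi_shift sa sb)
    also have "\<dots> \<le> e" using d1(2)[of z] d2(2)[of z] z by simp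
    finally show "nsq (\<lambda>x. a (x + z) + b (x + z) - (a x + b x)) \<le> e" .
  qed
qed

lemma TC_zero: "TC (\<lambda>x. 0)"
  unfolding TC_def by (auto simp: sqi_zero nsq_def)

lemma TC_cmult:
  assumes "TC a" shows "TC (\<lambda>x. c * a x)"
proof (cases "c = 0")
  case True then show ?thesis using TC_zero by simp
next
  case False
  have sa: "sq_integrable a" using assms by (auto simp: TC_def)
  show ?thesis unfolding TC_def
  proof (intro conjI allI impI)
    show "sq_integrable (\<lambda>x. c * a x)" using sa by (rule sqi_cmult)
    fix e :: real assume e: "e > 0"
    have cpos: "(cmod c)\<^sup>2 > 0" using False by simp
    obtain d where d: "d > 0" "\<And>z. \<bar>z\<bar> < d \<Longrightarrow> nsq (\<lambda>x. a (x + z) - a x) \<le> e / (cmod c)\<^sup>2"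
      using assms e cpos unfolding TC_def by (meson divide_pos_pos)
    show "\<exists>d>0. \<forall>z. \<bar>z\<bar> < d \<longrightarrow> nsq (\<lambda>x. c * a (x + z) - c * a x) \<le> e"
    proof (intro exI[of _ d] conjI allI impI)
      fix z assume "\<bar>z\<bar> < d"
      then have "(cmod c)\<^sup>2 * nsq (\<lambda>x. a (x + z) - a x) \<le> (cmod c)\<^sup>2 * (e / (cmod c)\<^sup>2)"
        using d cpos by (intro mult_left_mono) auto
      also have "\<dots> = e" using cpos by simp
      finally show "nsq (\<lambda>x. c * a (x + z) - c * a x) \<le> e"
        using nsq_cmult[of c "\<lambda>x. a (x + z) - a x"] by (simp add: algebra_simps)
    qed (use d in auto)
  qed
qed

lemma TC_approx:
  assumes s: "sq_integrable u"
    and ap: "\<And>e. e > 0 \<Longrightarrow> \<exists>v. TC v \<and> nsq (\<lambda>x. u x - v x) \<le> e"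
  shows "TC u"
  unfolding TC_def
proof (intro conjI allI impI)
  show "sq_integrable u" by fact
  fix e :: real assume e: "e > 0"
  obtain v where v: "TC v" "nsq (\<lambda>x. u x - v x) \<le> e/12" using ap[of "e/12"] e by auto
  have sv: "sq_integrable v" using v by (auto simp: TC_def)
  obtain d where d: "d > 0" "\<And>z. \<bar>z\<bar> < d \<Longrightarrow> nsq (\<lambda>x. v (x + z) - v x) \<le> e/12"
    using v(1) e unfolding TC_def by (meson divide_pos_pos zero_less_numeral)
  show "\<exists>d>0. \<forall>z. \<bar>z\<bar> < d \<longrightarrow> nsq (\<lambda>x. u (x + z) - u x) \<le> e"
  proof (intro exI[of _ d] conjI allI impI)
    show "d > 0" by fact
    fix z assume z: "\<bar>z\<bar> < d"
    have s1: "sq_integrable (\<lambda>x. u (x + z) - v (x + z))" by (intro sqi_diff sqi_shift s sv)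
    have s2: "sq_integrable (\<lambda>x. v (x + z) - v x)" by (intro sqi_diff sqi_shift s sv)
    have s3: "sq_integrable (\<lambda>x. v x - u x)" by (intro sqi_diff s sv)
    have A: "nsq (\<lambda>x. u (x + z) - u x) = nsq (\<lambda>x. (u (x + z) - v (x + z)) + ((v (x + z) - v x) + (v x - u x)))"
      by (simp add: algebra_simps)
    have B: "nsq (\<lambda>x. (u (x + z) - v (x + z)) + ((v (x + z) - v x) + (v x - u x))) \<le> 2 * nsq (\<lambda>x. u (x + z) - v (x + z)) + 2 * nsq (\<lambda>x. (v (x + z) - v x) + (v x - u x))"
      by (intro nsq_add_le s1 sqi_add s2 s3)
    have C: "nsq (\<lambda>x. (v (x + z) - v x) + (v x - u x)) \<le> 2 * nsq (\<lambda>x. v (x + z) - v x) + 2 * nsq (\<lambda>x. v x - u x)"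
      by (intro nsq_add_le s2 s3)
    have D: "nsq (\<lambda>x. u (x + z) - v (x + z)) = nsq (\<lambda>x. u x - v x)"
      using nsq_shift[of "\<lambda>x. u x - v x" z] by simp
    have E: "nsq (\<lambda>x. v x - u x) = nsq (\<lambda>x. u x - v x)"
      unfolding nsq_def by (simp add: norm_minus_commute)
    show "nsq (\<lambda>x. u (x + z) - u x) \<le> e" using A B C D E d(2)[OF z] v(2) e by linarith
  qed
qed

lemma TC_indicator:
  assumes A: "A \<in> sets borel" "emeasure lborel A < \<infinity>"
  shows "TC (\<lambda>x. complex_of_real (indicator A x))"
  unfolding TC_def
proof (intro conjI allI impI)
  have [measurable]: "A \<in> sets borel" by fact
  show "sq_integrable (\<lambda>x. complex_of_real (indicator A x))"
  proof -
    have "(\<lambda>x. (cmod (complex_of_real (indicator A x)))\<^sup>2) = (indicator A :: real \<Rightarrow> real)"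
      by (auto simp: indicator_def)
    then show ?thesis unfolding sq_integrable_def using A by auto
  qed
  fix e :: real assume e: "e > 0"
  obtain U where U: "open U" "A \<subseteq> U" "emeasure lborel (U - A) < ennreal (e/8)"
    using outer_regular_lborel[OF A(1), of "e/8"] e by auto
  have [measurable]: "U \<in> sets borel" using U(1) by auto
  have "emeasure lborel U \<le> emeasure lborel A + emeasure lborel (U - A)"
    using U(2) by (intro order_trans[OF emeasure_mono emeasure_subadditive]) auto
  moreover have UAfin: "emeasure lborel (U - A) < \<infinity>" using U(3) by (simp add: order_less_trans)
  ultimately have Ufin: "emeasure lborel U < \<infinity>" using A(2)
    by (simp add: order_le_less_trans)
  define W where "W n = {x. ball x (1 / Suc n) \<subseteq> U}" for n :: nat
  have Wclosed: "closed (W n)" for n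
  proof -
    have "- W n = (\<Union>y\<in>-U. ball y (1 / Suc n))"
      unfolding W_def by (auto simp: subset_eq dist_commute)
    moreover have "open (\<Union>y\<in>-U. ball y (1 / Suc n))" by auto
    ultimately show ?thesis by (metis closed_def double_complement)
  qed
  have Wm[measurable]: "W n \<in> sets borel" for n using Wclosed by auto
  have WU: "W n \<subseteq> U" for n unfolding W_def by auto
  have Winc: "incseq W"
  proof (rule incseq_SucI)
    fix n
    have "1 / real (Suc (Suc n)) \<le> 1 / real (Suc n)" by (simp add: frac_le)
    then show "W n \<subseteq> W (Suc n)" unfolding W_def by auto
  qed
  have Wun: "(\<Union>n. W n) = U"
  proof
    show "(\<Union>n. W n) \<subseteq> U" using WU by auto
    show "U \<subseteq> (\<Union>n. W n)"
    proof
      fix x assume "x \<in> U"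
      then obtain r where r: "r > 0" "ball x r \<subseteq> U" using U(1) open_contains_ball by blast
      obtain n where n: "1 / Suc n < r" using r(1) by (metis nat_approx_posE)
      then have "ball x (1 / Suc n) \<subseteq> U" using r(2) by auto
      then show "x \<in> (\<Union>n. W n)" unfolding W_def by auto
    qed
  qed
  have "(\<lambda>n. measure lborel (W n)) \<longlonglongrightarrow> measure lborel (\<Union>n. W n)"
    by (rule Lim_measure_incseq) (use Winc Ufin Wun in auto)
  then have lim: "(\<lambda>n. measure lborel (W n)) \<longlonglongrightarrow> measure lborel U" by (simp add: Wun)
  have "eventually (\<lambda>n. measure lborel U - e/8 < measure lborel (W n)) sequentially"
    by (rule order_tendstoD(1)[OF lim]) (use e in simp)
  then obtain n where n: "measure lborel U - e/8 < measure lborel (W n)"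
    by (auto simp: eventually_sequentially)
  have mUW: "measure lborel (U - W n) = measure lborel U - measure lborel (W n)"
    by (rule measure_Diff) (use Ufin WU in auto)
  have UWfin: "emeasure lborel (U - W n) < \<infinity>"
    using Ufin emeasure_mono[of "U - W n" U lborel] by (auto simp: order_le_less_trans)
  have mUA: "measure lborel (U - A) < e/8"
    using U(3) UAfin e by (simp add: emeasure_eq_ennreal_measure ennreal_less_iff)
  define d where "d = 1 / real (Suc n)"
  show "\<exists>d>0. \<forall>z. \<bar>z\<bar> < d \<longrightarrow>
      nsq (\<lambda>x. complex_of_real (indicator A (x + z)) - complex_of_real (indicator A x)) \<le> e"
  proof (intro exI[of _ d] conjI allI impI)
    show "d > 0" unfolding d_def by simp
    fix z :: real assume z: "\<bar>z\<bar> < d"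
    have k1: "x + z \<in> U" if "x \<in> W n" for x
    proof -
      have "x + z \<in> ball x d" using z by (simp add: dist_real_def)
      then show ?thesis using that unfolding W_def d_def by auto
    qed
    have k2: "x \<in> U" if "x + z \<in> W n" for x
    proof -
      have "x \<in> ball (x + z) d" using z by (simp add: dist_real_def)
      then show ?thesis using that unfolding W_def d_def by auto
    qed
    let ?g = "\<lambda>x. indicator (U - A) x + indicator (U - A) (x + z) + indicator (U - W n) x + indicator (U - W n) (x + z) :: real"
    have int1: "integrable lborel (indicator (U - A) :: real \<Rightarrow> real)" using UAfin by auto
    have int2: "integrable lborel (indicator (U - W n) :: real \<Rightarrow> real)" using UWfin by auto
    have int1': "integrable lborel (\<lambda>x. indicator (U - A) (x + z) :: real)"
      using int1 lborel_shift_integrable[of "indicator (U - A) :: real \<Rightarrow> real" z] by simp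
    have int2': "integrable lborel (\<lambda>x. indicator (U - W n) (x + z) :: real)"
      using int2 lborel_shift_integrable[of "indicator (U - W n) :: real \<Rightarrow> real" z] by simp
    have gint: "integrable lborel ?g" using int1 int2 int1' int2' by auto
    have "nsq (\<lambda>x. complex_of_real (indicator A (x + z)) - complex_of_real (indicator A x)) \<le> (LINT x|lborel. ?g x)"
    proof (rule nsq_le[OF gint])
      fix x
      show "(cmod (complex_of_real (indicator A (x + z)) - complex_of_real (indicator A x)))\<^sup>2 \<le> ?g x"
      proof (cases "(x + z \<in> A) = (x \<in> A)")
        case True
        then have "(cmod (complex_of_real (indicator A (x + z)) - complex_of_real (indicator A x)))\<^sup>2 = 0"
          by (simp add: indicator_def)
        moreover have "0 \<le> ?g x" by (simp add: add_nonneg_nonneg)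
        ultimately show ?thesis by simp
      next
        case False
        then have "(cmod (complex_of_real (indicator A (x + z)) - complex_of_real (indicator A x)))\<^sup>2 = 1"
          by (cases "x \<in> A") (simp_all add: indicator_def)
        moreover have "1 \<le> ?g x"
        proof (cases "x \<in> A")
          case True
          with False have xz: "x + z \<notin> A" by simp
          show ?thesis
          proof (cases "x \<in> W n")
            case True
            then have "indicator (U - A) (x + z) = (1::real)" using k1 xz by (simp add: indicator_def)
            then show ?thesis by (simp add: add_nonneg_nonneg)
          next
            case False
            then have "indicator (U - W n) x = (1::real)" using \<open>x \<in> A\<close> U(2) by (auto simp: indicator_def)
            then show ?thesis by (simp add: add_nonneg_nonneg)
          qed
        next
          case xA: False
          with False have xz: "x + z \<in> A" by simp
          show ?thesis
          proof (cases "x + z \<in> W n")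
            case True
            then have "indicator (U - A) x = (1::real)" using k2 xA by (simp add: indicator_def)
            then show ?thesis by (simp add: add_nonneg_nonneg)
          next
            case False
            then have "indicator (U - W n) (x + z) = (1::real)" using xz U(2) by (auto simp: indicator_def)
            then show ?thesis by (simp add: add_nonneg_nonneg)
          qed
        qed
        ultimately show ?thesis by simp
      qed
    qed measurable
    also have "(LINT x|lborel. ?g x) = 2 * measure lborel (U - A) + 2 * measure lborel (U - W n)"
      using int1 int2 int1' int2'
      by (simp add: lborel_shift_integral[of "indicator (U - A) :: real \<Rightarrow> real" z] lborel_shift_integral[of "indicator (U - W n) :: real \<Rightarrow> real" z])
    also have "\<dots> \<le> e" using mUW mUA n e by linarith
    finally show "nsq (\<lambda>x. complex_of_real (indicator A (x + z)) - complex_of_real (indicator A x)) \<le> e" .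
  qed
qed

lemma TC_simple:
  assumes sf: "simple_function lborel s" and sq: "sq_integrable s"
  shows "TC s"
proof -
  define R where "R = s ` UNIV"
  have finR: "finite R" using sf unfolding R_def simple_function_def by simp
  have [measurable]: "s \<in> borel_measurable borel" using sq by (simp add: sqi_meas)
  have rep: "s = (\<lambda>x. \<Sum>c\<in>R. c * complex_of_real (indicator (s -` {c}) x))"
  proof
    fix x
    have "(\<Sum>c\<in>R. c * complex_of_real (indicator (s -` {c}) x)) = (\<Sum>c\<in>R. if s x = c then c else 0)"
      by (intro sum.cong) (auto simp: indicator_def)
    also have "\<dots> = s x" using finR by (simp add: R_def)
    finally show "s x = (\<Sum>c\<in>R. c * complex_of_real (indicator (s -` {c}) x))" by simp
  qed
  have each: "TC (\<lambda>x. c * complex_of_real (indicator (s -` {c}) x))" for c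
  proof (cases "c = 0")
    case True then show ?thesis using TC_zero by simp
  next
    case False
    have "s -` {c} \<inter> space borel \<in> sets borel"
      by (rule measurable_sets[of s borel borel]) auto
    then have Sm[measurable]: "s -` {c} \<in> sets borel" by simp
    have "integrable lborel (indicator (s -` {c}) :: real \<Rightarrow> real)"
    proof (rule Bochner_Integration.integrable_bound)
      show "integrable lborel (\<lambda>x. (cmod (s x))\<^sup>2 / (cmod c)\<^sup>2)"
        using sq by (simp add: sq_integrable_def)
      show "indicator (s -` {c}) \<in> borel_measurable lborel" by measurable
      show "AE x in lborel. norm (indicator (s -` {c}) x :: real) \<le> norm ((cmod (s x))\<^sup>2 / (cmod c)\<^sup>2)"
        using False by (auto simp: indicator_def intro!: AE_I2)
    qed
    then have "emeasure lborel (s -` {c}) < \<infinity>" by (simp add: integrable_indicator_iff)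
    then show ?thesis using TC_cmult TC_indicator Sm by blast
  qed
  have "F \<subseteq> R \<Longrightarrow> TC (\<lambda>x. \<Sum>c\<in>F. c * complex_of_real (indicator (s -` {c}) x))" for F
  proof (induction F rule: infinite_finite_induct)
    case (infinite A) then show ?case using finR finite_subset by blast
  next
    case empty then show ?case using TC_zero by simp
  next
    case (insert c F)
    then show ?case using TC_add[OF each[of c] insert.IH] by simp
  qed
  then show ?thesis by (subst rep) simp
qed

lemma TC_all:
  assumes sq: "sq_integrable u" shows "TC u"
proof -
  have [measurable]: "u \<in> borel_measurable borel" using sq by (simp add: sqi_meas)
  have "u \<in> borel_measurable lborel" by simp
  from borel_measurable_implies_sequence_metric[OF this, of 0] obtain F where
    F: "\<And>i. simple_function lborel (F i)" "\<And>x. (\<lambda>i. F i x) \<longlonglongrightarrow> u x"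
       "\<And>i x. dist (F i x) 0 \<le> 2 * dist (u x) 0"
    by auto
  have Fm[measurable]: "F i \<in> borel_measurable borel" for i
    using borel_measurable_simple_function[OF F(1)[of i]] by simp
  have Fb: "cmod (F i x) \<le> 2 * cmod (u x)" for i x using F(3)[of i x] by simp
  have Fsq: "sq_integrable (F i)" for i
    unfolding sq_integrable_def
  proof
    show "F i \<in> borel_measurable lborel" by simp
    show "integrable lborel (\<lambda>x. (cmod (F i x))\<^sup>2)"
    proof (rule Bochner_Integration.integrable_bound)
      show "integrable lborel (\<lambda>x. 4 * (cmod (u x))\<^sup>2)" using sq by (simp add: sq_integrable_def)
      show "(\<lambda>x. (cmod (F i x))\<^sup>2) \<in> borel_measurable lborel" by measurable
      show "AE x in lborel. norm ((cmod (F i x))\<^sup>2) \<le> norm (4 * (cmod (u x))\<^sup>2)"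
      proof (rule AE_I2)
        fix x
        have "(cmod (F i x))\<^sup>2 \<le> (2 * cmod (u x))\<^sup>2" using Fb[of i x] by (intro power_mono) auto
        then show "norm ((cmod (F i x))\<^sup>2) \<le> norm (4 * (cmod (u x))\<^sup>2)" by (simp add: power_mult_distrib)
      qed
    qed
  qed
  have lim0: "(\<lambda>i. LINT x|lborel. (cmod (u x - F i x))\<^sup>2) \<longlonglongrightarrow> (LINT (x::real)|lborel. (0::real))"
  proof (rule Bochner_Integration.integral_dominated_convergence[where M=lborel and w = "\<lambda>x. 9 * (cmod (u x))\<^sup>2" and s = "\<lambda>i x. (cmod (u x - F i x))\<^sup>2" and f = "\<lambda>x::real. 0::real"])
    show "(\<lambda>x. 0::real) \<in> borel_measurable lborel" by simp
    show "(\<lambda>x. (cmod (u x - F i x))\<^sup>2) \<in> borel_measurable lborel" for i by measurable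
    show "integrable lborel (\<lambda>x. 9 * (cmod (u x))\<^sup>2)" using sq by (simp add: sq_integrable_def)
    show "AE x in lborel. (\<lambda>i. (cmod (u x - F i x))\<^sup>2) \<longlonglongrightarrow> 0"
    proof (rule AE_I2)
      fix x
      have "(\<lambda>i. u x - F i x) \<longlonglongrightarrow> u x - u x" by (intro tendsto_intros) (rule F(2))
      then have "(\<lambda>i. (cmod (u x - F i x))\<^sup>2) \<longlonglongrightarrow> (cmod (u x - u x))\<^sup>2" by (intro tendsto_power tendsto_norm)
      then show "(\<lambda>i. (cmod (u x - F i x))\<^sup>2) \<longlonglongrightarrow> 0" by simp
    qed
    show "AE x in lborel. norm ((cmod (u x - F i x))\<^sup>2) \<le> 9 * (cmod (u x))\<^sup>2" for i
    proof (rule AE_I2)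
      fix x
      have "cmod (u x - F i x) \<le> cmod (u x) + cmod (F i x)" by (rule norm_triangle_ineq4)
      also have "\<dots> \<le> 3 * cmod (u x)" using Fb[of i x] by simp
      finally have "(cmod (u x - F i x))\<^sup>2 \<le> (3 * cmod (u x))\<^sup>2" by (intro power_mono) auto
      then show "norm ((cmod (u x - F i x))\<^sup>2) \<le> 9 * (cmod (u x))\<^sup>2" by (simp add: power_mult_distrib)
    qed
  qed
  then have lim: "(\<lambda>i. LINT x|lborel. (cmod (u x - F i x))\<^sup>2) \<longlonglongrightarrow> 0" by simp
  show ?thesis
  proof (rule TC_approx[OF sq])
    fix e :: real assume e: "e > 0"
    have "eventually (\<lambda>i. (LINT x|lborel. (cmod (u x - F i x))\<^sup>2) < e) sequentially"
      using order_tendstoD(2)[OF lim, of e] e by simp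
    then obtain i where "(LINT x|lborel. (cmod (u x - F i x))\<^sup>2) < e" by (auto simp: eventually_sequentially)
    then show "\<exists>v. TC v \<and> nsq (\<lambda>x. u x - v x) \<le> e"
      using TC_simple[OF F(1)[of i] Fsq[of i]] by (intro exI[of _ "F i"]) (auto simp: nsq_def)
  qed
qed

lemma gauss_int:
  assumes e: "\<epsilon> > 0"
  shows "integrable lborel (\<lambda>x. exp (- \<epsilon> * x\<^sup>2))"
    and "(LINT x|lborel. exp (- \<epsilon> * x\<^sup>2)) = sqrt (pi / \<epsilon>)"
proof -
  define \<sigma> where "\<sigma> = 1 / sqrt (2 * \<epsilon>)"
  have sp: "\<sigma> > 0" using e by (simp add: \<sigma>_def)
  have s2: "\<sigma>\<^sup>2 = 1 / (2 * \<epsilon>)" using e by (simp add: \<sigma>_def power_divide)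
  have eq: "exp (- \<epsilon> * x\<^sup>2) = sqrt (pi / \<epsilon>) * normal_density 0 \<sigma> x" for x
  proof -
    have "2 * pi * \<sigma>\<^sup>2 = pi / \<epsilon>" unfolding s2 using e by (simp add: field_simps)
    moreover have "- (x - 0)\<^sup>2 / (2 * \<sigma>\<^sup>2) = - \<epsilon> * x\<^sup>2" unfolding s2 using e by (simp add: field_simps)
    moreover have "sqrt (pi / \<epsilon>) > 0" using e by simp
    ultimately show ?thesis unfolding normal_density_def using e by simp
  qed
  show "integrable lborel (\<lambda>x. exp (- \<epsilon> * x\<^sup>2))" unfolding eq using integrable_normal_density[OF sp] by simp
  show "(LINT x|lborel. exp (- \<epsilon> * x\<^sup>2)) = sqrt (pi / \<epsilon>)" unfolding eq using integral_normal_density[OF sp] by simp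
qed

lemma gauss_ft:
  assumes e: "\<epsilon> > 0"
  shows "(CLINT w|lborel. complex_of_real (exp (- \<epsilon> * w\<^sup>2)) * exp (- \<i> * complex_of_real (s * w)))
         = complex_of_real (sqrt (pi / \<epsilon>) * exp (- s\<^sup>2 / (4 * \<epsilon>)))"
proof -
  define c where "c = sqrt (2 * \<epsilon>)"
  have cp: "c > 0" using e by (simp add: c_def)
  have c2: "c\<^sup>2 = 2 * \<epsilon>" using e by (simp add: c_def)
  define t where "t = - s / c"
  have "char std_normal_distribution t = complex_of_real (exp (- (t^2) / 2))"
    by (simp add: char_std_normal_distribution)
  moreover have "char std_normal_distribution t = (CLINT x|lborel. std_normal_density x *\<^sub>R iexp (t * x))"
    unfolding char_def
    by (subst integral_density) (auto)
  moreover have "(CLINT x|lborel. std_normal_density x *\<^sub>R iexp (t * x))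
      = c *\<^sub>R (CLINT w|lborel. std_normal_density (0 + c * w) *\<^sub>R iexp (t * (0 + c * w)))"
    using lborel_integral_real_affine[of c "\<lambda>x. std_normal_density x *\<^sub>R iexp (t * x)" 0] cp by simp
  moreover have "(\<lambda>w. std_normal_density (0 + c * w) *\<^sub>R iexp (t * (0 + c * w)))
      = (\<lambda>w. (1 / sqrt (2 * pi)) *\<^sub>R (complex_of_real (exp (- \<epsilon> * w\<^sup>2)) * exp (- \<i> * complex_of_real (s * w))))"
  proof
    fix w
    have "- (c * w)\<^sup>2 / 2 = - \<epsilon> * w\<^sup>2" using c2 by (simp add: power_mult_distrib)
    moreover have "t * (c * w) = - (s * w)" using cp by (simp add: t_def)
    ultimately show "std_normal_density (0 + c * w) *\<^sub>R iexp (t * (0 + c * w))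
      = (1 / sqrt (2 * pi)) *\<^sub>R (complex_of_real (exp (- \<epsilon> * w\<^sup>2)) * exp (- \<i> * complex_of_real (s * w)))"
      by (simp add: std_normal_density_def scaleR_conv_of_real)
  qed
  ultimately have "complex_of_real (exp (- (t^2) / 2)) =
     (c / sqrt (2 * pi)) *\<^sub>R (CLINT w|lborel. complex_of_real (exp (- \<epsilon> * w\<^sup>2)) * exp (- \<i> * complex_of_real (s * w)))"
    by simp
  moreover have "exp (- (t^2) / 2) = exp (- s\<^sup>2 / (4 * \<epsilon>))"
    using c2 cp by (simp add: t_def power_divide)
  moreover have "sqrt (2 * pi) / c = sqrt (pi / \<epsilon>)"
    using e by (simp add: c_def real_sqrt_divide[symmetric])
  moreover have "c / sqrt (2 * pi) > 0" using cp by simp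
  ultimately show ?thesis
    by (simp add: scaleR_conv_of_real field_simps)
qed

definition FT :: "(real \<Rightarrow> complex) \<Rightarrow> real \<Rightarrow> complex" where
  "FT u w = (CLINT x|lborel. u x * exp (- \<i> * complex_of_real (w * x)))"

definition gk :: "real \<Rightarrow> real \<Rightarrow> real" where
  "gk \<epsilon> z = sqrt (pi / \<epsilon>) * exp (- z\<^sup>2 / (4 * \<epsilon>))"

lemma cmod_exp_ii: "cmod (exp (\<i> * complex_of_real r)) = 1"
  by (simp add: norm_exp_eq_Re)

lemma cmod_exp_mii: "cmod (exp (- \<i> * complex_of_real r)) = 1"
  by (simp add: norm_exp_eq_Re)

lemma (in pair_sigma_finite) integrable_pair_mult:
  fixes f :: "'a \<Rightarrow> complex" and g :: "'b \<Rightarrow> complex"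
  assumes f: "integrable M1 f" and g: "integrable M2 g"
  shows "integrable (M1 \<Otimes>\<^sub>M M2) (\<lambda>p. f (fst p) * g (snd p))"
proof (rule Fubini_integrable)
  have [measurable]: "f \<in> borel_measurable M1" "g \<in> borel_measurable M2" using f g by auto
  show "(\<lambda>p. f (fst p) * g (snd p)) \<in> borel_measurable (M1 \<Otimes>\<^sub>M M2)" by measurable
  have "integrable M1 (\<lambda>x. norm (f x) * (\<integral>y. norm (g y) \<partial>M2))"
    using f by (intro integrable_mult_left) auto
  then show "integrable M1 (\<lambda>x. \<integral>y. norm (f (fst (x, y)) * g (snd (x, y))) \<partial>M2)"
    by (simp add: norm_mult)
  show "AE x in M1. integrable M2 (\<lambda>y. f (fst (x, y)) * g (snd (x, y)))"
    using g by (auto intro!: integrable_mult_right)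
qed

lemma lborel2_integrable_mult:
  fixes f g :: "real \<Rightarrow> complex"
  assumes f: "integrable lborel f" and g: "integrable lborel g"
  shows "integrable (lborel :: (real \<times> real) measure) (\<lambda>p. f (fst p) * g (snd p))"
  using lborel_pair.integrable_pair_mult[OF f g] by (simp add: lborel_prod)

lemma FT_prod:
  assumes f: "integrable lborel u" and g: "integrable lborel v"
  shows "FT u w * cnj (FT v w) =
    (CLINT x|lborel. CLINT y|lborel. u x * cnj (v y) * exp (- \<i> * complex_of_real (w * (x - y))))"
proof -
  have c: "cnj (FT v w) = (CLINT y|lborel. cnj (v y) * exp (\<i> * complex_of_real (w * y)))"
  proof -
    have "cnj (FT v w) = (CLINT y|lborel. cnj (v y * exp (- \<i> * complex_of_real (w * y))))"
      unfolding FT_def by (rule Bochner_Integration.integral_cnj[symmetric])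
    also have "\<dots> = (CLINT y|lborel. cnj (v y) * exp (\<i> * complex_of_real (w * y)))"
      by (intro Bochner_Integration.integral_cong) (simp_all add: exp_cnj)
    finally show ?thesis .
  qed
  have "FT u w * cnj (FT v w) = (CLINT x|lborel. u x * exp (- \<i> * complex_of_real (w * x)) * cnj (FT v w))"
    unfolding FT_def by simp
  also have "\<dots> = (CLINT x|lborel. CLINT y|lborel. u x * exp (- \<i> * complex_of_real (w * x)) * (cnj (v y) * exp (\<i> * complex_of_real (w * y))))"
    unfolding c by simp
  also have "\<dots> = (CLINT x|lborel. CLINT y|lborel. u x * cnj (v y) * exp (- \<i> * complex_of_real (w * (x - y))))"
  proof (intro Bochner_Integration.integral_cong refl)
    fix x y
    have "exp (- \<i> * complex_of_real (w * x)) * exp (\<i> * complex_of_real (w * y)) = exp (- \<i> * complex_of_real (w * (x - y)))"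
      by (simp add: exp_add[symmetric] algebra_simps)
    then show "u x * exp (- \<i> * complex_of_real (w * x)) * (cnj (v y) * exp (\<i> * complex_of_real (w * y))) =
          u x * cnj (v y) * exp (- \<i> * complex_of_real (w * (x - y)))"
      by (metis (no_types, lifting) mult.assoc mult.left_commute)
  qed
  finally show ?thesis .
qed

lemma lborel2_integral:
  fixes F :: "real \<times> real \<Rightarrow> complex"
  assumes "integrable (lborel :: (real \<times> real) measure) F"
  shows "(CLINT x|lborel. CLINT y|lborel. F (x, y)) = integral\<^sup>L lborel F"
  using lborel_pair.integral_fst'[of F] assms by (simp add: lborel_prod)

lemma meas3:
  assumes "f \<in> borel_measurable ((borel \<Otimes>\<^sub>M borel) \<Otimes>\<^sub>M borel)"
  shows "f \<in> borel_measurable ((lborel :: (real \<times> real) measure) \<Otimes>\<^sub>M (lborel :: real measure))"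
proof -
  have s1: "sets (lborel :: (real \<times> real) measure) = sets (borel \<Otimes>\<^sub>M borel)" by (metis borel_prod sets_lborel)
  have "sets ((lborel :: (real \<times> real) measure) \<Otimes>\<^sub>M (lborel :: real measure)) = sets ((borel \<Otimes>\<^sub>M borel) \<Otimes>\<^sub>M borel)"
    by (rule sets_pair_measure_cong[OF s1]) simp
  then have eq: "borel_measurable ((lborel :: (real \<times> real) measure) \<Otimes>\<^sub>M (lborel :: real measure)) = borel_measurable ((borel \<Otimes>\<^sub>M borel) \<Otimes>\<^sub>M borel)"
    by (rule measurable_cong_sets) simp
  show ?thesis unfolding eq by (rule assms)
qed

lemma gk_le: "\<epsilon> > 0 \<Longrightarrow> gk \<epsilon> z \<le> sqrt (pi / \<epsilon>)"
  unfolding gk_def by (simp add: mult_le_cancel_left1)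

lemma gk_pos: "\<epsilon> > 0 \<Longrightarrow> gk \<epsilon> z > 0"
  unfolding gk_def by simp

lemma int_meas: "integrable lborel (u :: real \<Rightarrow> complex) \<Longrightarrow> u \<in> borel_measurable borel"
  using borel_measurable_integrable[of lborel u] by simp

lemma reg1:
  fixes u v :: "real \<Rightarrow> complex"
  assumes f: "integrable lborel u" and g: "integrable lborel v" and e: "\<epsilon> > 0"
  shows "(CLINT w|lborel. complex_of_real (exp (- \<epsilon> * w\<^sup>2)) * (FT u w * cnj (FT v w)))
       = (CLINT x|lborel. CLINT y|lborel. u x * cnj (v y) * complex_of_real (gk \<epsilon> (x - y)))"
proof -
  have [measurable]: "u \<in> borel_measurable borel" "v \<in> borel_measurable borel" using f g by (auto simp: int_meas)
  define A where "A = (\<lambda>p::real \<times> real. u (fst p) * cnj (v (snd p)))"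
  have Am2[measurable]: "A \<in> borel_measurable (borel \<Otimes>\<^sub>M borel)" unfolding A_def by measurable
  then have Am[measurable]: "A \<in> borel_measurable borel" by (simp add: borel_prod)
  have Aint: "integrable lborel A" unfolding A_def by (intro lborel2_integrable_mult f integrable_cnj g)
  define E where "E = (\<lambda>w::real. complex_of_real (exp (- \<epsilon> * w\<^sup>2)))"
  have Eint: "integrable lborel E" unfolding E_def using gauss_int(1)[OF e] by simp
  define k where "k = (\<lambda>(p::real \<times> real) (w::real). A p * exp (- \<i> * complex_of_real (w * (fst p - snd p))) * E w)"
  have int3: "integrable (lborel \<Otimes>\<^sub>M lborel) (case_prod k)"
  proof (rule Bochner_Integration.integrable_bound)
    show "integrable (lborel \<Otimes>\<^sub>M lborel) (\<lambda>q. A (fst q) * E (snd q))"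
      by (rule lborel_pair.integrable_pair_mult[OF Aint Eint])
    show "case_prod k \<in> borel_measurable (lborel \<Otimes>\<^sub>M lborel)"
      unfolding k_def E_def A_def by (rule meas3) measurable
    show "AE q in lborel \<Otimes>\<^sub>M lborel. norm (case_prod k q) \<le> norm (A (fst q) * E (snd q))"
      by (intro AE_I2) (auto simp: k_def norm_mult cmod_exp_mii)
  qed
  have hint: "integrable (lborel :: (real \<times> real) measure) (\<lambda>p. A p * exp (- \<i> * complex_of_real (w * (fst p - snd p))))" for w
  proof (rule Bochner_Integration.integrable_bound[OF Aint])
    have "(\<lambda>p. A p * exp (- \<i> * complex_of_real (w * (fst p - snd p)))) \<in> borel_measurable (borel \<Otimes>\<^sub>M borel)" by measurable
    then show "(\<lambda>p. A p * exp (- \<i> * complex_of_real (w * (fst p - snd p)))) \<in> borel_measurable lborel" by (simp add: borel_prod)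
    show "AE x in lborel. norm (A x * exp (- \<i> * complex_of_real (w * (fst x - snd x)))) \<le> norm (A x)"
      by (intro AE_I2) (simp add: norm_mult cmod_exp_mii)
  qed
  have L: "complex_of_real (exp (- \<epsilon> * w\<^sup>2)) * (FT u w * cnj (FT v w)) = (\<integral>p. k p w \<partial>lborel)" for w
  proof -
    have "FT u w * cnj (FT v w) = (CLINT x|lborel. CLINT y|lborel. (\<lambda>p. A p * exp (- \<i> * complex_of_real (w * (fst p - snd p)))) (x, y))"
      unfolding FT_prod[OF f g] A_def by (simp add: mult.assoc)
    also have "\<dots> = (\<integral>p. A p * exp (- \<i> * complex_of_real (w * (fst p - snd p))) \<partial>lborel)"
      by (rule lborel2_integral[OF hint])
    finally show ?thesis unfolding k_def E_def by (simp add: mult.commute)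
  qed
  have R: "(\<integral>w. k p w \<partial>lborel) = A p * complex_of_real (gk \<epsilon> (fst p - snd p))" for p
  proof -
    have "(\<integral>w. k p w \<partial>lborel) = A p * (CLINT w|lborel. complex_of_real (exp (- \<epsilon> * w\<^sup>2)) * exp (- \<i> * complex_of_real ((fst p - snd p) * w)))"
      unfolding k_def E_def by (simp add: mult.commute mult.left_commute)
    also have "\<dots> = A p * complex_of_real (gk \<epsilon> (fst p - snd p))"
      unfolding gauss_ft[OF e] gk_def ..
    finally show ?thesis .
  qed
  have Rint: "integrable (lborel :: (real \<times> real) measure) (\<lambda>p. A p * complex_of_real (gk \<epsilon> (fst p - snd p)))"
  proof (rule Bochner_Integration.integrable_bound)
    show "integrable lborel (\<lambda>p. sqrt (pi / \<epsilon>) *\<^sub>R A p)" using Aint by simp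
    have "(\<lambda>p. A p * complex_of_real (gk \<epsilon> (fst p - snd p))) \<in> borel_measurable (borel \<Otimes>\<^sub>M borel)"
      unfolding gk_def by measurable
    then show "(\<lambda>p. A p * complex_of_real (gk \<epsilon> (fst p - snd p))) \<in> borel_measurable lborel" by (simp add: borel_prod)
    show "AE x in lborel. norm (A x * complex_of_real (gk \<epsilon> (fst x - snd x))) \<le> norm (sqrt (pi / \<epsilon>) *\<^sub>R A x)"
    proof (rule AE_I2)
      fix x
      have "cmod (A x) * gk \<epsilon> (fst x - snd x) \<le> cmod (A x) * sqrt (pi / \<epsilon>)"
        using gk_le[OF e] by (intro mult_left_mono) auto
      then show "norm (A x * complex_of_real (gk \<epsilon> (fst x - snd x))) \<le> norm (sqrt (pi / \<epsilon>) *\<^sub>R A x)"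
        using gk_pos[OF e, of "fst x - snd x"] e by (simp add: norm_mult mult.commute)
    qed
  qed
  have "(CLINT w|lborel. complex_of_real (exp (- \<epsilon> * w\<^sup>2)) * (FT u w * cnj (FT v w)))
      = (\<integral>w. \<integral>p. k p w \<partial>lborel \<partial>lborel)" unfolding L ..
  also have "\<dots> = (\<integral>p. \<integral>w. k p w \<partial>lborel \<partial>lborel)"
    by (rule lborel_pair.Fubini_integral[OF int3])
  also have "\<dots> = (\<integral>p. A p * complex_of_real (gk \<epsilon> (fst p - snd p)) \<partial>lborel)" unfolding R ..
  also have "\<dots> = (CLINT x|lborel. CLINT y|lborel. (\<lambda>p. A p * complex_of_real (gk \<epsilon> (fst p - snd p))) (x, y))"
    by (rule lborel2_integral[OF Rint, symmetric])
  also have "\<dots> = (CLINT x|lborel. CLINT y|lborel. u x * cnj (v y) * complex_of_real (gk \<epsilon> (x - y)))"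
    unfolding A_def by simp
  finally show ?thesis .
qed

lemma lborel_reflect_integral:
  fixes f :: "real \<Rightarrow> 'a::{banach, second_countable_topology}"
  shows "(LINT y|lborel. f y) = (LINT z|lborel. f (x - z))"
  using lborel_integral_real_affine[of "-1" f x] by simp

lemma lborel_reflect_integrable:
  fixes f :: "real \<Rightarrow> 'a::{banach, second_countable_topology}"
  shows "integrable lborel (\<lambda>z. f (x - z)) \<longleftrightarrow> integrable lborel f"
  using lborel_integrable_real_affine_iff[of "-1" f x] by simp

lemma reg2:
  fixes u v :: "real \<Rightarrow> complex"
  assumes f: "integrable lborel u" and g: "integrable lborel v" and e: "\<epsilon> > 0"
  shows "(CLINT x|lborel. CLINT y|lborel. u x * cnj (v y) * complex_of_real (gk \<epsilon> (x - y)))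
       = (CLINT z|lborel. complex_of_real (gk \<epsilon> z) * (CLINT x|lborel. u x * cnj (v (x - z))))"
proof -
  have [measurable]: "u \<in> borel_measurable borel" "v \<in> borel_measurable borel" using f g by (auto simp: int_meas)
  define h where "h = (\<lambda>x z. u x * cnj (v (x - z)) * complex_of_real (gk \<epsilon> z))"
  have hm[measurable]: "case_prod h \<in> borel_measurable (lborel \<Otimes>\<^sub>M lborel)"
    unfolding h_def gk_def by measurable
  have S: "(CLINT y|lborel. u x * cnj (v y) * complex_of_real (gk \<epsilon> (x - y))) = (CLINT z|lborel. h x z)" for x
    unfolding h_def by (subst lborel_reflect_integral[of _ x]) simp
  have vint: "integrable lborel (\<lambda>z. v (x - z))" for x using g lborel_reflect_integrable[of v x] by simp
  have hint: "integrable lborel (h x)" for x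
  proof (rule Bochner_Integration.integrable_bound)
    show "integrable lborel (\<lambda>z. (cmod (u x) * sqrt (pi / \<epsilon>)) *\<^sub>R v (x - z))" using vint[of x] by simp
    show "h x \<in> borel_measurable lborel" unfolding h_def gk_def by measurable
    show "AE z in lborel. norm (h x z) \<le> norm ((cmod (u x) * sqrt (pi / \<epsilon>)) *\<^sub>R v (x - z))"
    proof (rule AE_I2)
      fix z
      have "cmod (u x) * cmod (v (x - z)) * gk \<epsilon> z \<le> cmod (u x) * cmod (v (x - z)) * sqrt (pi / \<epsilon>)"
        using gk_le[OF e] by (intro mult_left_mono) auto
      then show "norm (h x z) \<le> norm ((cmod (u x) * sqrt (pi / \<epsilon>)) *\<^sub>R v (x - z))"
        using gk_pos[OF e, of z] e unfolding h_def by (simp add: norm_mult mult_ac)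
    qed
  qed
  have int2: "integrable (lborel \<Otimes>\<^sub>M lborel) (case_prod h)"
  proof (rule lborel_pair.Fubini_integrable)
    show "case_prod h \<in> borel_measurable (lborel \<Otimes>\<^sub>M lborel)" by (rule hm)
    show "AE x in lborel. integrable lborel (\<lambda>y. case_prod h (x, y))" using hint by simp
    show "integrable lborel (\<lambda>x. LINT y|lborel. norm (case_prod h (x, y)))"
    proof (rule Bochner_Integration.integrable_bound)
      show "integrable lborel (\<lambda>x. (sqrt (pi / \<epsilon>) * (LINT y|lborel. norm (v y))) *\<^sub>R norm (u x))"
        using f by simp
      show "(\<lambda>x. LINT y|lborel. norm (case_prod h (x, y))) \<in> borel_measurable lborel"
        by (rule lborel.borel_measurable_lebesgue_integral) simp
      show "AE x in lborel. norm (LINT y|lborel. norm (case_prod h (x, y))) \<le> norm ((sqrt (pi / \<epsilon>) * (LINT y|lborel. norm (v y))) *\<^sub>R norm (u x))"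
      proof (rule AE_I2)
        fix x
        have i1: "integrable lborel (\<lambda>z. (cmod (u x) * sqrt (pi / \<epsilon>)) * norm (v (x - z)))"
          using vint[of x] by simp
        have "(LINT y|lborel. norm (h x y)) \<le> (LINT z|lborel. (cmod (u x) * sqrt (pi / \<epsilon>)) * norm (v (x - z)))"
        proof (rule integral_mono)
          show "integrable lborel (\<lambda>y. norm (h x y))" using hint[of x] by simp
          show "integrable lborel (\<lambda>z. (cmod (u x) * sqrt (pi / \<epsilon>)) * norm (v (x - z)))" by (rule i1)
          fix z
          have "cmod (u x) * cmod (v (x - z)) * gk \<epsilon> z \<le> cmod (u x) * cmod (v (x - z)) * sqrt (pi / \<epsilon>)"
            using gk_le[OF e] by (intro mult_left_mono) auto
          then show "norm (h x z) \<le> (cmod (u x) * sqrt (pi / \<epsilon>)) * norm (v (x - z))"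
            using gk_pos[OF e, of z] e unfolding h_def by (simp add: norm_mult mult_ac)
        qed
        also have "\<dots> = (cmod (u x) * sqrt (pi / \<epsilon>)) * (LINT y|lborel. norm (v y))"
          using lborel_reflect_integral[of "\<lambda>y. norm (v y)" x] by simp
        finally have "(LINT y|lborel. norm (h x y)) \<le> (cmod (u x) * sqrt (pi / \<epsilon>)) * (LINT y|lborel. norm (v y))" .
        moreover have "(LINT y|lborel. norm (h x y)) \<ge> 0" by (rule integral_nonneg_AE) auto
        moreover have "(LINT y|lborel. norm (v y)) \<ge> 0" by (rule integral_nonneg_AE) auto
        ultimately show "norm (LINT y|lborel. norm (case_prod h (x, y))) \<le> norm ((sqrt (pi / \<epsilon>) * (LINT y|lborel. norm (v y))) *\<^sub>R norm (u x))"
          using e by (simp add: mult_ac)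
      qed
    qed
  qed
  have "(CLINT x|lborel. CLINT y|lborel. u x * cnj (v y) * complex_of_real (gk \<epsilon> (x - y)))
      = (CLINT x|lborel. CLINT z|lborel. h x z)" unfolding S ..
  also have "\<dots> = (CLINT z|lborel. CLINT x|lborel. h x z)"
    by (rule lborel_pair.Fubini_integral[OF int2, symmetric])
  also have "\<dots> = (CLINT z|lborel. complex_of_real (gk \<epsilon> z) * (CLINT x|lborel. u x * cnj (v (x - z))))"
    unfolding h_def by (simp add: mult.commute)
  finally show ?thesis .
qed

definition corr :: "(real \<Rightarrow> complex) \<Rightarrow> (real \<Rightarrow> complex) \<Rightarrow> real \<Rightarrow> complex" where
  "corr u v z = (CLINT x|lborel. u x * cnj (v (x - z)))"

lemma nsq_shift': "nsq (\<lambda>x. a (x - z)) = nsq a"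
  using nsq_shift[of a "-z"] by simp

lemma sqi_shift': "sq_integrable a \<Longrightarrow> sq_integrable (\<lambda>x. a (x - z))"
  using sqi_shift[of a "-z"] by simp

lemma corr_bound:
  assumes "sq_integrable u" "sq_integrable v"
  shows "cmod (corr u v z) \<le> sqrt (nsq u * nsq v)"
proof -
  have "(cmod (corr u v z))\<^sup>2 \<le> nsq u * nsq (\<lambda>x. v (x - z))"
    unfolding corr_def by (rule CS[OF assms(1) sqi_shift'[OF assms(2)]])
  then show ?thesis unfolding nsq_shift' by (simp add: real_le_rsqrt)
qed

lemma corr_cont:
  assumes u: "sq_integrable u" and v: "sq_integrable v"
  shows "isCont (corr u v) 0"
  unfolding isCont_def LIM_eq
proof (intro allI impI)
  fix r :: real assume r: "r > 0"
  define e where "e = r\<^sup>2 / (nsq u + 1)"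
  have e: "e > 0" using r nsq_nonneg[of u] by (simp add: e_def)
  obtain d where d: "d > 0" "\<And>z. \<bar>z\<bar> < d \<Longrightarrow> nsq (\<lambda>x. v (x + z) - v x) \<le> e"
    using TC_all[OF v] e unfolding TC_def by blast
  show "\<exists>s>0. \<forall>x. x \<noteq> 0 \<and> norm (x - 0) < s \<longrightarrow> norm (corr u v x - corr u v 0) < r"
  proof (intro exI[of _ d] conjI allI impI)
    show "d > 0" by fact
    fix z :: real assume "z \<noteq> 0 \<and> norm (z - 0) < d"
    then have z: "\<bar>-z\<bar> < d" by simp
    have sv: "sq_integrable (\<lambda>x. v (x - z) - v x)" by (intro sqi_diff sqi_shift' v)
    have "corr u v z - corr u v 0 = (CLINT x|lborel. u x * cnj (v (x - z) - v x))"
      unfolding corr_def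
      by (subst Bochner_Integration.integral_diff[symmetric])
         (auto intro!: sqi_prod_int u v sqi_shift' simp: algebra_simps)
    then have "(cmod (corr u v z - corr u v 0))\<^sup>2 \<le> nsq u * nsq (\<lambda>x. v (x - z) - v x)"
      using CS[OF u sv] by simp
    also have "\<dots> \<le> nsq u * e"
      using d(2)[OF z] nsq_nonneg[of u] by (intro mult_left_mono) auto
    also have "\<dots> < r\<^sup>2"
    proof -
      have "nsq u * e = r\<^sup>2 * (nsq u / (nsq u + 1))" unfolding e_def by simp
      also have "\<dots> < r\<^sup>2 * 1" using r nsq_nonneg[of u] by (intro mult_strict_left_mono) auto
      finally show ?thesis by simp
    qed
    finally show "norm (corr u v z - corr u v 0) < r"
      using r by (simp add: power_less_imp_less_base)
  qed
qed

lemma corr_meas: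
  assumes u: "sq_integrable u" and v: "sq_integrable v"
  shows "corr u v \<in> borel_measurable borel"
proof -
  have [measurable]: "u \<in> borel_measurable borel" "v \<in> borel_measurable borel" using u v by (auto simp: sqi_meas)
  have "(\<lambda>z. CLINT x|lborel. u x * cnj (v (x - z))) \<in> borel_measurable lborel"
    by (rule lborel.borel_measurable_lebesgue_integral) measurable
  then show ?thesis unfolding corr_def by simp
qed

lemma gk_lim:
  assumes u: "sq_integrable u" and v: "sq_integrable v"
  shows "(\<lambda>n. CLINT z|lborel. complex_of_real (gk (1 / Suc n) z) * corr u v z)
           \<longlonglongrightarrow> 2 * pi * corr u v 0"
proof -
  define c where "c n = sqrt (1 / real (Suc n))" for n
  have cpos: "c n > 0" for n by (simp add: c_def)
  have c0: "c \<longlonglongrightarrow> 0"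
  proof -
    have "(\<lambda>n. 1 / real (Suc n)) \<longlonglongrightarrow> 0" by (rule LIMSEQ_Suc[OF lim_const_over_n])
    then have "(\<lambda>n. sqrt (1 / real (Suc n))) \<longlonglongrightarrow> sqrt 0" by (intro tendsto_intros)
    moreover have "c = (\<lambda>n. sqrt (1 / real (Suc n)))" by (simp add: c_def fun_eq_iff)
    ultimately show ?thesis by simp
  qed
  define E where "E = (\<lambda>w::real. sqrt pi * exp (- w\<^sup>2 / 4))"
  have Cm[measurable]: "corr u v \<in> borel_measurable borel" by (rule corr_meas[OF u v])
  define B where "B = sqrt (nsq u * nsq v)"
  have CB: "cmod (corr u v z) \<le> B" for z unfolding B_def by (rule corr_bound[OF u v])
  have Eint: "integrable lborel E"
    using gauss_int(1)[of "1/4"] unfolding E_def by simp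
  have EI: "(LINT w|lborel. E w) = 2 * pi"
  proof -
    have "(LINT w|lborel. E w) = sqrt pi * (LINT w|lborel. exp (- (1/4) * w\<^sup>2))" unfolding E_def by simp
    also have "\<dots> = sqrt pi * sqrt (pi / (1/4))" using gauss_int(2)[of "1/4"] by simp
    also have "\<dots> = sqrt pi * (2 * sqrt pi)" by (simp add: real_sqrt_mult)
    also have "\<dots> = 2 * pi" by simp
    finally show ?thesis .
  qed
  have sub: "(CLINT z|lborel. complex_of_real (gk (1 / Suc n) z) * corr u v z)
       = (CLINT w|lborel. complex_of_real (E w) * corr u v (c n * w))" for n
  proof -
    have "(CLINT z|lborel. complex_of_real (gk (1 / Suc n) z) * corr u v z)
        = c n *\<^sub>R (CLINT w|lborel. complex_of_real (gk (1 / Suc n) (0 + c n * w)) * corr u v (0 + c n * w))"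
      using lborel_integral_real_affine[of "c n" "\<lambda>z. complex_of_real (gk (1 / Suc n) z) * corr u v z" 0] cpos[of n]
      by simp
    also have "\<dots> = (CLINT w|lborel. complex_of_real (E w) * corr u v (c n * w))"
    proof -
      have "c n * gk (1 / Suc n) (c n * w) = E w" for w
      proof -
        have cc: "(c n)\<^sup>2 = 1 / real (Suc n)" by (simp add: c_def)
        have "- (c n * w)\<^sup>2 / (4 * (1 / real (Suc n))) = - w\<^sup>2 / 4"
          by (simp add: power_mult_distrib cc)
        moreover have "c n * sqrt (pi / (1 / real (Suc n))) = sqrt pi"
          by (simp add: c_def real_sqrt_mult real_sqrt_divide)
        ultimately show ?thesis unfolding gk_def E_def by (simp add: mult.assoc[symmetric])
      qed
      note eqE = this
      have "c n *\<^sub>R (CLINT w|lborel. complex_of_real (gk (1 / Suc n) (0 + c n * w)) * corr u v (0 + c n * w))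
          = (CLINT w|lborel. complex_of_real (c n) * (complex_of_real (gk (1 / Suc n) (c n * w)) * corr u v (c n * w)))"
        by (simp add: scaleR_conv_of_real)
      also have "\<dots> = (CLINT w|lborel. complex_of_real (E w) * corr u v (c n * w))"
      proof (intro Bochner_Integration.integral_cong refl)
        fix w
        have "complex_of_real (c n) * (complex_of_real (gk (1 / Suc n) (c n * w)) * corr u v (c n * w))
            = complex_of_real (c n * gk (1 / Suc n) (c n * w)) * corr u v (c n * w)" by simp
        then show "complex_of_real (c n) * (complex_of_real (gk (1 / Suc n) (c n * w)) * corr u v (c n * w))
            = complex_of_real (E w) * corr u v (c n * w)" unfolding eqE .
      qed
      finally show ?thesis .
    qed
    finally show ?thesis .
  qed
  have "(\<lambda>n. CLINT w|lborel. complex_of_real (E w) * corr u v (c n * w))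
        \<longlonglongrightarrow> (CLINT w|lborel. complex_of_real (E w) * corr u v 0)"
  proof (rule Bochner_Integration.integral_dominated_convergence[where w = "\<lambda>w. B * E w"])
    show "(\<lambda>w. complex_of_real (E w) * corr u v 0) \<in> borel_measurable lborel" unfolding E_def by measurable
    show "(\<lambda>w. complex_of_real (E w) * corr u v (c n * w)) \<in> borel_measurable lborel" for n
      unfolding E_def by measurable
    show "integrable lborel (\<lambda>w. B * E w)" using Eint by simp
    show "AE w in lborel. (\<lambda>n. complex_of_real (E w) * corr u v (c n * w)) \<longlonglongrightarrow> complex_of_real (E w) * corr u v 0"
    proof (rule AE_I2)
      fix w
      have "(\<lambda>n. c n * w) \<longlonglongrightarrow> 0 * w" by (intro tendsto_intros c0)
      then have "(\<lambda>n. corr u v (c n * w)) \<longlonglongrightarrow> corr u v 0"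
        using isCont_tendsto_compose[OF corr_cont[OF u v]] by simp
      then show "(\<lambda>n. complex_of_real (E w) * corr u v (c n * w)) \<longlonglongrightarrow> complex_of_real (E w) * corr u v 0"
        by (intro tendsto_intros)
    qed
    show "AE w in lborel. norm (complex_of_real (E w) * corr u v (c n * w)) \<le> B * E w" for n
    proof (rule AE_I2)
      fix w
      have "E w \<ge> 0" unfolding E_def by simp
      then show "norm (complex_of_real (E w) * corr u v (c n * w)) \<le> B * E w"
        using CB[of "c n * w"] mult_right_mono[OF CB[of "c n * w"] \<open>E w \<ge> 0\<close>] by (simp add: norm_mult mult.commute)
    qed
  qed
  also have "(CLINT w|lborel. complex_of_real (E w) * corr u v 0) = 2 * pi * corr u v 0"
    using EI by simp
  finally show ?thesis unfolding sub .
qed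

lemma FT_meas:
  assumes "integrable lborel u" shows "FT u \<in> borel_measurable borel"
proof -
  have [measurable]: "u \<in> borel_measurable borel" using assms by (simp add: int_meas)
  have "(\<lambda>w. CLINT x|lborel. u x * exp (- \<i> * complex_of_real (w * x))) \<in> borel_measurable lborel"
    by (rule lborel.borel_measurable_lebesgue_integral) measurable
  then show ?thesis unfolding FT_def by simp
qed

lemma FT_bound:
  assumes "integrable lborel u" shows "cmod (FT u w) \<le> (LINT x|lborel. cmod (u x))"
proof -
  have "cmod (FT u w) \<le> (LINT x|lborel. cmod (u x * exp (- \<i> * complex_of_real (w * x))))"
    unfolding FT_def by (rule integral_norm_bound)
  also have "\<dots> = (LINT x|lborel. cmod (u x))" by (simp add: norm_mult cmod_exp_mii)
  finally show ?thesis .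
qed

lemma gk_int:
  assumes e: "\<epsilon> > 0"
  shows "integrable lborel (gk \<epsilon>)" and "(LINT z|lborel. gk \<epsilon> z) = 2 * pi"
proof -
  have eq: "gk \<epsilon> = (\<lambda>z. sqrt (pi / \<epsilon>) * exp (- (1 / (4 * \<epsilon>)) * z\<^sup>2))"
    unfolding gk_def by (auto simp: fun_eq_iff)
  have e': "1 / (4 * \<epsilon>) > 0" using e by simp
  show "integrable lborel (gk \<epsilon>)" unfolding eq using gauss_int(1)[OF e'] by simp
  have "(LINT z|lborel. gk \<epsilon> z) = sqrt (pi / \<epsilon>) * sqrt (pi / (1 / (4 * \<epsilon>)))"
    unfolding eq integral_mult_right_zero gauss_int(2)[OF e'] ..
  also have "\<dots> = sqrt (pi / \<epsilon> * (pi / (1 / (4 * \<epsilon>))))" by (rule real_sqrt_mult[symmetric])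
  also have "pi / \<epsilon> * (pi / (1 / (4 * \<epsilon>))) = (2 * pi)\<^sup>2" using e by (simp add: power2_eq_square field_simps)
  also have "sqrt ((2 * pi)\<^sup>2) = 2 * pi" by (rule real_sqrt_abs[THEN trans]) simp
  finally show "(LINT z|lborel. gk \<epsilon> z) = 2 * pi" .
qed

lemma reg_full:
  assumes f: "integrable lborel u" and g: "integrable lborel v" and e: "\<epsilon> > 0"
  shows "(CLINT w|lborel. complex_of_real (exp (- \<epsilon> * w\<^sup>2)) * (FT u w * cnj (FT v w)))
       = (CLINT z|lborel. complex_of_real (gk \<epsilon> z) * corr u v z)"
  unfolding reg1[OF f g e] reg2[OF f g e] corr_def ..

lemma reg_bound:
  assumes f: "integrable lborel u" "sq_integrable u" and g: "integrable lborel v" "sq_integrable v"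
    and e: "\<epsilon> > 0"
  shows "cmod (CLINT z|lborel. complex_of_real (gk \<epsilon> z) * corr u v z) \<le> 2 * pi * sqrt (nsq u * nsq v)"
proof -
  have "cmod (CLINT z|lborel. complex_of_real (gk \<epsilon> z) * corr u v z)
      \<le> (LINT z|lborel. cmod (complex_of_real (gk \<epsilon> z) * corr u v z))" by (rule integral_norm_bound)
  also have "\<dots> \<le> (LINT z|lborel. sqrt (nsq u * nsq v) * gk \<epsilon> z)"
  proof (rule integral_mono)
    have [measurable]: "corr u v \<in> borel_measurable borel" by (rule corr_meas[OF f(2) g(2)])
    show "integrable lborel (\<lambda>z. sqrt (nsq u * nsq v) * gk \<epsilon> z)" using gk_int(1)[OF e] by simp
    show "integrable lborel (\<lambda>z. cmod (complex_of_real (gk \<epsilon> z) * corr u v z))"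
    proof (rule Bochner_Integration.integrable_bound)
      show "integrable lborel (\<lambda>z. sqrt (nsq u * nsq v) * gk \<epsilon> z)" using gk_int(1)[OF e] by simp
      show "(\<lambda>z. cmod (complex_of_real (gk \<epsilon> z) * corr u v z)) \<in> borel_measurable lborel"
        unfolding gk_def by measurable
      show "AE z in lborel. norm (cmod (complex_of_real (gk \<epsilon> z) * corr u v z)) \<le> norm (sqrt (nsq u * nsq v) * gk \<epsilon> z)"
        using corr_bound[OF f(2) g(2)] gk_pos[OF e] nsq_nonneg[of u] nsq_nonneg[of v]
        by (intro AE_I2) (simp add: norm_mult abs_mult mult.commute mult_left_mono less_imp_le)
    qed
    fix z
    show "cmod (complex_of_real (gk \<epsilon> z) * corr u v z) \<le> sqrt (nsq u * nsq v) * gk \<epsilon> z"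
      using corr_bound[OF f(2) g(2), of z] gk_pos[OF e, of z]
      by (simp add: norm_mult mult.commute mult_left_mono less_imp_le)
  qed
  also have "\<dots> = 2 * pi * sqrt (nsq u * nsq v)" using gk_int[OF e] by simp
  finally show ?thesis .
qed

lemma exp_seq_incseq: "incseq (\<lambda>n. exp (- (1 / real (Suc n)) * w\<^sup>2))"
proof (rule incseq_SucI)
  fix n
  have "1 / real (Suc (Suc n)) * w\<^sup>2 \<le> 1 / real (Suc n) * w\<^sup>2"
    by (intro mult_right_mono) (auto simp: frac_le)
  then show "exp (- (1 / real (Suc n)) * w\<^sup>2) \<le> exp (- (1 / real (Suc (Suc n))) * w\<^sup>2)" by simp
qed

lemma exp_seq_lim: "(\<lambda>n. exp (- (1 / real (Suc n)) * w\<^sup>2)) \<longlonglongrightarrow> 1"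
proof -
  have "(\<lambda>n. 1 / real (Suc n)) \<longlonglongrightarrow> 0" by (rule LIMSEQ_Suc[OF lim_const_over_n])
  then have "(\<lambda>n. exp (- (1 / real (Suc n)) * w\<^sup>2)) \<longlonglongrightarrow> exp (- 0 * w\<^sup>2)" by (intro tendsto_intros)
  then show ?thesis by simp
qed

lemma FT_sq:
  assumes f: "integrable lborel u" "sq_integrable u"
  shows "sq_integrable (FT u)"
proof -
  have FTm[measurable]: "FT u \<in> borel_measurable borel" by (rule FT_meas[OF f(1)])
  define L where "L = (LINT x|lborel. cmod (u x))"
  have FTb: "cmod (FT u w) \<le> L" for w unfolding L_def by (rule FT_bound[OF f(1)])
  define e where "e n w = exp (- (1 / real (Suc n)) * w\<^sup>2)" for n w
  have eint: "integrable lborel (\<lambda>w. e n w * (cmod (FT u w))\<^sup>2)" for n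
  proof (rule Bochner_Integration.integrable_bound)
    show "integrable lborel (\<lambda>w. L\<^sup>2 * e n w)" unfolding e_def using gauss_int(1)[of "1 / real (Suc n)"] by simp
    show "(\<lambda>w. e n w * (cmod (FT u w))\<^sup>2) \<in> borel_measurable lborel" unfolding e_def by measurable
    show "AE w in lborel. norm (e n w * (cmod (FT u w))\<^sup>2) \<le> norm (L\<^sup>2 * e n w)"
    proof (rule AE_I2)
      fix w
      have "(cmod (FT u w))\<^sup>2 \<le> L\<^sup>2" using FTb[of w] by (intro power_mono) auto
      then show "norm (e n w * (cmod (FT u w))\<^sup>2) \<le> norm (L\<^sup>2 * e n w)"
        by (simp add: e_def mult.commute mult_left_mono)
    qed
  qed
  have ebound: "(LINT w|lborel. e n w * (cmod (FT u w))\<^sup>2) \<le> 2 * pi * nsq u" for n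
  proof -
    have en: "1 / real (Suc n) > 0" by simp
    have "complex_of_real (LINT w|lborel. e n w * (cmod (FT u w))\<^sup>2)
        = (CLINT w|lborel. complex_of_real (e n w * (cmod (FT u w))\<^sup>2))"
      by (rule integral_complex_of_real[symmetric])
    also have "\<dots> = (CLINT w|lborel. complex_of_real (exp (- (1 / real (Suc n)) * w\<^sup>2)) * (FT u w * cnj (FT u w)))"
      by (intro Bochner_Integration.integral_cong refl) (simp only: e_def of_real_mult complex_norm_square)
    also have "\<dots> = (CLINT z|lborel. complex_of_real (gk (1 / real (Suc n)) z) * corr u u z)"
      by (rule reg_full[OF f(1) f(1) en])
    finally have "cmod (complex_of_real (LINT w|lborel. e n w * (cmod (FT u w))\<^sup>2)) \<le> 2 * pi * sqrt (nsq u * nsq u)"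
      using reg_bound[OF f f en] by simp
    then show ?thesis using nsq_nonneg[of u] by simp
  qed
  have lim: "(\<lambda>n. \<integral>\<^sup>+w. ennreal (e n w * (cmod (FT u w))\<^sup>2) \<partial>lborel) \<longlonglongrightarrow> (\<integral>\<^sup>+w. ennreal ((cmod (FT u w))\<^sup>2) \<partial>lborel)"
  proof (rule nn_integral_LIMSEQ)
    show "incseq (\<lambda>n w. ennreal (e n w * (cmod (FT u w))\<^sup>2))"
      unfolding incseq_def le_fun_def e_def
      using exp_seq_incseq unfolding incseq_def
      by (auto intro!: ennreal_leI mult_right_mono)
    show "(\<lambda>w. ennreal (e n w * (cmod (FT u w))\<^sup>2)) \<in> borel_measurable lborel" for n
      unfolding e_def by measurable
    show "(\<lambda>n. ennreal (e n w * (cmod (FT u w))\<^sup>2)) \<longlonglongrightarrow> ennreal ((cmod (FT u w))\<^sup>2)" for w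
    proof (rule tendsto_ennrealI)
      have "(\<lambda>n. e n w * (cmod (FT u w))\<^sup>2) \<longlonglongrightarrow> 1 * (cmod (FT u w))\<^sup>2"
        unfolding e_def by (intro tendsto_intros exp_seq_lim)
      then show "(\<lambda>n. e n w * (cmod (FT u w))\<^sup>2) \<longlonglongrightarrow> (cmod (FT u w))\<^sup>2" by simp
    qed
  qed
  have "(\<integral>\<^sup>+w. ennreal ((cmod (FT u w))\<^sup>2) \<partial>lborel) \<le> ennreal (2 * pi * nsq u)"
  proof (rule LIMSEQ_le_const2[OF lim], intro exI allI impI)
    fix n
    have "(\<integral>\<^sup>+w. ennreal (e n w * (cmod (FT u w))\<^sup>2) \<partial>lborel) = ennreal (LINT w|lborel. e n w * (cmod (FT u w))\<^sup>2)"
      by (rule nn_integral_eq_integral[OF eint]) (simp add: e_def)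
    also have "\<dots> \<le> ennreal (2 * pi * nsq u)" using ebound[of n] by (rule ennreal_leI)
    finally show "(\<integral>\<^sup>+w. ennreal (e n w * (cmod (FT u w))\<^sup>2) \<partial>lborel) \<le> ennreal (2 * pi * nsq u)" .
  qed
  then have "(\<integral>\<^sup>+w. ennreal ((cmod (FT u w))\<^sup>2) \<partial>lborel) < \<infinity>" by (simp add: le_less_trans)
  then have "integrable lborel (\<lambda>w. (cmod (FT u w))\<^sup>2)"
    by (intro integrableI_bounded) auto
  then show ?thesis unfolding sq_integrable_def by simp
qed

lemma parseval:
  assumes f: "integrable lborel u" "sq_integrable u" and g: "integrable lborel v" "sq_integrable v"
  shows "(CLINT w|lborel. FT u w * cnj (FT v w)) = 2 * pi * (CLINT x|lborel. u x * cnj (v x))"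
proof -
  have su: "sq_integrable (FT u)" by (rule FT_sq[OF f])
  have sv: "sq_integrable (FT v)" by (rule FT_sq[OF g])
  have [measurable]: "FT u \<in> borel_measurable borel" "FT v \<in> borel_measurable borel"
    using FT_meas f(1) g(1) by auto
  have A: "(\<lambda>n. CLINT w|lborel. complex_of_real (exp (- (1 / real (Suc n)) * w\<^sup>2)) * (FT u w * cnj (FT v w)))
      \<longlonglongrightarrow> (CLINT w|lborel. FT u w * cnj (FT v w))"
  proof (rule Bochner_Integration.integral_dominated_convergence[where w = "\<lambda>w. cmod (FT u w * cnj (FT v w))"])
    show "(\<lambda>w. FT u w * cnj (FT v w)) \<in> borel_measurable lborel" by measurable
    show "(\<lambda>w. complex_of_real (exp (- (1 / real (Suc n)) * w\<^sup>2)) * (FT u w * cnj (FT v w))) \<in> borel_measurable lborel" for n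
      by measurable
    show "integrable lborel (\<lambda>w. cmod (FT u w * cnj (FT v w)))"
      using sqi_prod_int[OF su sv] by (rule integrable_norm)
    show "AE w in lborel. (\<lambda>n. complex_of_real (exp (- (1 / real (Suc n)) * w\<^sup>2)) * (FT u w * cnj (FT v w))) \<longlonglongrightarrow> FT u w * cnj (FT v w)"
    proof (rule AE_I2)
      fix w
      have "(\<lambda>n. complex_of_real (exp (- (1 / real (Suc n)) * w\<^sup>2)) * (FT u w * cnj (FT v w))) \<longlonglongrightarrow> complex_of_real 1 * (FT u w * cnj (FT v w))"
        by (intro tendsto_intros exp_seq_lim)
      then show "(\<lambda>n. complex_of_real (exp (- (1 / real (Suc n)) * w\<^sup>2)) * (FT u w * cnj (FT v w))) \<longlonglongrightarrow> FT u w * cnj (FT v w)" by simp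
    qed
    show "AE w in lborel. norm (complex_of_real (exp (- (1 / real (Suc n)) * w\<^sup>2)) * (FT u w * cnj (FT v w))) \<le> cmod (FT u w * cnj (FT v w))" for n
    proof (rule AE_I2)
      fix w
      have "exp (- (1 / real (Suc n)) * w\<^sup>2) \<le> 1" by simp
      then show "norm (complex_of_real (exp (- (1 / real (Suc n)) * w\<^sup>2)) * (FT u w * cnj (FT v w))) \<le> cmod (FT u w * cnj (FT v w))"
        by (simp add: norm_mult mult_left_le_one_le)
    qed
  qed
  have B: "(\<lambda>n. CLINT w|lborel. complex_of_real (exp (- (1 / real (Suc n)) * w\<^sup>2)) * (FT u w * cnj (FT v w)))
      \<longlonglongrightarrow> 2 * pi * corr u v 0"
  proof -
    have "(\<lambda>n. CLINT w|lborel. complex_of_real (exp (- (1 / real (Suc n)) * w\<^sup>2)) * (FT u w * cnj (FT v w)))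
        = (\<lambda>n. CLINT z|lborel. complex_of_real (gk (1 / Suc n) z) * corr u v z)"
      by (intro ext reg_full f(1) g(1)) simp
    then show ?thesis using gk_lim[OF f(2) g(2)] by simp
  qed
  from LIMSEQ_unique[OF A B] show ?thesis by (simp add: corr_def)
qed

definition LT :: "lct_param \<Rightarrow> (real \<Rightarrow> complex) \<Rightarrow> real \<Rightarrow> complex" where
  "LT M p \<xi> = (CLINT \<tau>|lborel. p \<tau> * lct_kernel M \<tau> \<xi>)"

definition kc :: "real \<Rightarrow> complex" where
  "kc b = 1 / csqrt (\<i> * 2 * complex_of_real pi * complex_of_real b)"

definition iph :: "real \<Rightarrow> complex" where
  "iph r = exp (\<i> * complex_of_real r)"

lemma iph_add: "iph (x + y) = iph x * iph y"
  unfolding iph_def by (simp add: exp_add[symmetric] distrib_left)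

lemma iph_cnj: "cnj (iph x) = iph (- x)"
  unfolding iph_def by (simp add: exp_cnj)

lemma iph_norm[simp]: "cmod (iph x) = 1"
  unfolding iph_def by (rule cmod_exp_ii)

lemma iph_mult_cnj: "iph x * cnj (iph x) = 1"
  unfolding iph_cnj iph_add[symmetric] by (simp add: iph_def)

lemma iph_meas[measurable]: "iph \<in> borel_measurable borel"
  unfolding iph_def by measurable

lemma mexp_iph: "exp (- \<i> * complex_of_real r) = iph (- r)"
  unfolding iph_def by simp

lemma kernel_eq:
  "lct_kernel (a, b, c, d) \<tau> \<xi> = kc b * (iph (d / (2 * b) * \<xi>\<^sup>2) * (iph (a / (2 * b) * \<tau>\<^sup>2) * iph (- (\<xi> / b * \<tau>))))"
proof -
  have eq: "a / (2 * b) * \<tau>\<^sup>2 - 1 / b * \<tau> * \<xi> + d / (2 * b) * \<xi>\<^sup>2 = d / (2 * b) * \<xi>\<^sup>2 + (a / (2 * b) * \<tau>\<^sup>2 + - (\<xi> / b * \<tau>))"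
    by (simp add: algebra_simps)
  have "lct_kernel (a, b, c, d) \<tau> \<xi> = kc b * iph (a / (2 * b) * \<tau>\<^sup>2 - 1 / b * \<tau> * \<xi> + d / (2 * b) * \<xi>\<^sup>2)"
    unfolding lct_kernel_def kc_def iph_def by simp
  also have "\<dots> = kc b * iph (d / (2 * b) * \<xi>\<^sup>2 + (a / (2 * b) * \<tau>\<^sup>2 + - (\<xi> / b * \<tau>)))"
    by (simp only: eq)
  also have "\<dots> = kc b * (iph (d / (2 * b) * \<xi>\<^sup>2) * (iph (a / (2 * b) * \<tau>\<^sup>2) * iph (- (\<xi> / b * \<tau>))))"
    by (simp only: iph_add)
  finally show ?thesis .
qed

lemma cmod_kc: "b \<noteq> 0 \<Longrightarrow> (cmod (kc b))\<^sup>2 = 1 / (2 * pi * \<bar>b\<bar>)"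
  unfolding kc_def by (simp add: norm_divide norm_mult power_divide)

lemma LT_FT:
  "LT (a, b, c, d) p \<xi> = kc b * iph (d / (2 * b) * \<xi>\<^sup>2) * FT (\<lambda>\<tau>. p \<tau> * iph (a / (2 * b) * \<tau>\<^sup>2)) (\<xi> / b)"
proof -
  have "LT (a, b, c, d) p \<xi> = (CLINT \<tau>|lborel. (kc b * iph (d / (2 * b) * \<xi>\<^sup>2)) * (p \<tau> * iph (a / (2 * b) * \<tau>\<^sup>2) * exp (- \<i> * complex_of_real (\<xi> / b * \<tau>))))"
    unfolding LT_def kernel_eq mexp_iph by (intro Bochner_Integration.integral_cong refl) (simp add: mult_ac)
  also have "\<dots> = kc b * iph (d / (2 * b) * \<xi>\<^sup>2) * FT (\<lambda>\<tau>. p \<tau> * iph (a / (2 * b) * \<tau>\<^sup>2)) (\<xi> / b)"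
    unfolding FT_def by (rule integral_mult_right_zero)
  finally show ?thesis .
qed

lemma sqi_scale:
  assumes "sq_integrable u" "b \<noteq> (0::real)"
  shows "sq_integrable (\<lambda>\<xi>. u (\<xi> / b))"
  unfolding sq_integrable_def
proof
  have [measurable]: "u \<in> borel_measurable borel" using assms by (simp add: sqi_meas)
  show "(\<lambda>\<xi>. u (\<xi> / b)) \<in> borel_measurable lborel" by measurable
  have "integrable lborel (\<lambda>x. (cmod (u (0 + (1 / b) * x)))\<^sup>2)"
    using lborel_integrable_real_affine_iff[of "1/b" "\<lambda>x. (cmod (u x))\<^sup>2" 0] assms by (simp add: sq_integrable_def)
  then show "integrable lborel (\<lambda>x. (cmod (u (x / b)))\<^sup>2)" by simp
qed

lemma chirp_int:
  assumes "integrable lborel p" "sq_integrable p"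
  shows "integrable lborel (\<lambda>\<tau>. p \<tau> * iph (r * \<tau>\<^sup>2))" and "sq_integrable (\<lambda>\<tau>. p \<tau> * iph (r * \<tau>\<^sup>2))"
proof -
  have [measurable]: "p \<in> borel_measurable borel" using assms by (simp add: sqi_meas)
  show "integrable lborel (\<lambda>\<tau>. p \<tau> * iph (r * \<tau>\<^sup>2))"
    by (rule Bochner_Integration.integrable_bound[OF assms(1)]) (auto simp: norm_mult)
  show "sq_integrable (\<lambda>\<tau>. p \<tau> * iph (r * \<tau>\<^sup>2))"
    using sqi_bmult[OF assms(2), of "\<lambda>\<tau>. iph (r * \<tau>\<^sup>2)" 1] by (simp add: mult.commute)
qed

lemma LT_sq:
  assumes b: "b \<noteq> 0" and p: "integrable lborel p" "sq_integrable p"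
  shows "sq_integrable (LT (a, b, c, d) p)"
proof -
  have "sq_integrable (\<lambda>\<xi>. FT (\<lambda>\<tau>. p \<tau> * iph (a / (2 * b) * \<tau>\<^sup>2)) (\<xi> / b))"
    by (intro sqi_scale b FT_sq chirp_int p)
  then have "sq_integrable (\<lambda>\<xi>. (kc b * iph (d / (2 * b) * \<xi>\<^sup>2)) * FT (\<lambda>\<tau>. p \<tau> * iph (a / (2 * b) * \<tau>\<^sup>2)) (\<xi> / b))"
    by (rule sqi_bmult[where B = "cmod (kc b)"]) (auto simp: norm_mult)
  then show ?thesis unfolding LT_FT[abs_def] by simp
qed

lemma LT_parseval:
  assumes b: "b \<noteq> 0" and p: "integrable lborel p" "sq_integrable p" and q: "integrable lborel q" "sq_integrable q"
  shows "(CLINT \<xi>|lborel. LT (a, b, c, d) p \<xi> * cnj (LT (a, b, c, d) q \<xi>)) = (CLINT \<tau>|lborel. p \<tau> * cnj (q \<tau>))"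
proof -
  define P where "P = (\<lambda>\<tau>. p \<tau> * iph (a / (2 * b) * \<tau>\<^sup>2))"
  define Q where "Q = (\<lambda>\<tau>. q \<tau> * iph (a / (2 * b) * \<tau>\<^sup>2))"
  define K where "K = kc b * cnj (kc b)"
  define F where "F = (\<lambda>w. FT P w * cnj (FT Q w))"
  have pt: "LT (a, b, c, d) p \<xi> * cnj (LT (a, b, c, d) q \<xi>) = K * F (\<xi> / b)" for \<xi>
  proof -
    have "LT (a, b, c, d) p \<xi> * cnj (LT (a, b, c, d) q \<xi>)
        = (kc b * cnj (kc b)) * (iph (d / (2 * b) * \<xi>\<^sup>2) * cnj (iph (d / (2 * b) * \<xi>\<^sup>2))) * F (\<xi> / b)"
      unfolding LT_FT F_def P_def Q_def by (simp add: mult_ac)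
    then show ?thesis by (simp add: iph_mult_cnj K_def)
  qed
  have "(CLINT \<xi>|lborel. LT (a, b, c, d) p \<xi> * cnj (LT (a, b, c, d) q \<xi>)) = K * (CLINT \<xi>|lborel. F (\<xi> / b))"
    unfolding pt by simp
  also have "(CLINT \<xi>|lborel. F (\<xi> / b)) = \<bar>b\<bar> *\<^sub>R (CLINT w|lborel. F ((0 + b * w) / b))"
    using lborel_integral_real_affine[of b "\<lambda>\<xi>. F (\<xi> / b)" 0] b by simp
  also have "(CLINT w|lborel. F ((0 + b * w) / b)) = (CLINT w|lborel. F w)"
    using b by simp
  also have "(CLINT w|lborel. F w) = 2 * pi * (CLINT \<tau>|lborel. P \<tau> * cnj (Q \<tau>))"
    unfolding F_def P_def Q_def by (intro parseval chirp_int p q)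
  also have "(CLINT \<tau>|lborel. P \<tau> * cnj (Q \<tau>)) = (CLINT \<tau>|lborel. p \<tau> * cnj (q \<tau>))"
    unfolding P_def Q_def by (intro Bochner_Integration.integral_cong refl) (simp add: mult_ac iph_mult_cnj)
  moreover have "K = complex_of_real (1 / (2 * pi * \<bar>b\<bar>))"
    unfolding K_def complex_norm_square[symmetric] cmod_kc[OF b] ..
  ultimately show ?thesis
    using b by (simp add: scaleR_conv_of_real)
qed

lemma ip_lim:
  assumes F: "\<And>n. sq_integrable (Fn n)" "sq_integrable F" and G: "\<And>n. sq_integrable (Gn n)" "sq_integrable G"
    and lF: "(\<lambda>n. nsq (\<lambda>x. Fn n x - F x)) \<longlonglongrightarrow> 0" and lG: "(\<lambda>n. nsq (\<lambda>x. Gn n x - G x)) \<longlonglongrightarrow> 0"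
  shows "(\<lambda>n. CLINT x|lborel. Fn n x * cnj (Gn n x)) \<longlonglongrightarrow> (CLINT x|lborel. F x * cnj (G x))"
proof -
  define a where "a n = nsq (\<lambda>x. Fn n x - F x)" for n
  define g where "g n = nsq (\<lambda>x. Gn n x - G x)" for n
  have sF: "sq_integrable (\<lambda>x. Fn n x - F x)" for n by (intro sqi_diff F)
  have sG: "sq_integrable (\<lambda>x. Gn n x - G x)" for n by (intro sqi_diff G)
  have eq: "(CLINT x|lborel. Fn n x * cnj (Gn n x)) - (CLINT x|lborel. F x * cnj (G x))
      = (CLINT x|lborel. (Fn n x - F x) * cnj (Gn n x)) + (CLINT x|lborel. F x * cnj (Gn n x - G x))" for n
  proof -
    have i1: "integrable lborel (\<lambda>x. (Fn n x - F x) * cnj (Gn n x))" by (rule sqi_prod_int[OF sF G(1)])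
    have i2: "integrable lborel (\<lambda>x. F x * cnj (Gn n x - G x))" by (rule sqi_prod_int[OF F(2) sG])
    have "(CLINT x|lborel. (Fn n x - F x) * cnj (Gn n x)) + (CLINT x|lborel. F x * cnj (Gn n x - G x))
        = (CLINT x|lborel. (Fn n x - F x) * cnj (Gn n x) + F x * cnj (Gn n x - G x))"
      using i1 i2 by simp
    also have "\<dots> = (CLINT x|lborel. Fn n x * cnj (Gn n x) - F x * cnj (G x))"
      by (intro Bochner_Integration.integral_cong refl) (simp add: algebra_simps)
    also have "\<dots> = (CLINT x|lborel. Fn n x * cnj (Gn n x)) - (CLINT x|lborel. F x * cnj (G x))"
      using sqi_prod_int[OF F(1) G(1)] sqi_prod_int[OF F(2) G(2)] by simp
    finally show ?thesis by simp
  qed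
  have nG: "nsq (Gn n) \<le> 2 * g n + 2 * nsq G" for n
  proof -
    have "nsq (Gn n) = nsq (\<lambda>x. (Gn n x - G x) + G x)" by simp
    also have "\<dots> \<le> 2 * nsq (\<lambda>x. Gn n x - G x) + 2 * nsq G" by (rule nsq_add_le[OF sG G(2)])
    finally show ?thesis unfolding g_def .
  qed
  have bound: "cmod ((CLINT x|lborel. Fn n x * cnj (Gn n x)) - (CLINT x|lborel. F x * cnj (G x)))
      \<le> sqrt (a n * (2 * g n + 2 * nsq G)) + sqrt (nsq F * g n)" for n
  proof -
    have c1: "cmod (CLINT x|lborel. (Fn n x - F x) * cnj (Gn n x)) \<le> sqrt (a n * (2 * g n + 2 * nsq G))"
    proof -
      have "(cmod (CLINT x|lborel. (Fn n x - F x) * cnj (Gn n x)))\<^sup>2 \<le> a n * nsq (Gn n)"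
        unfolding a_def by (rule CS[OF sF G(1)])
      also have "\<dots> \<le> a n * (2 * g n + 2 * nsq G)"
        using nG[of n] nsq_nonneg unfolding a_def by (intro mult_left_mono) auto
      finally show ?thesis by (simp add: real_le_rsqrt)
    qed
    have c2: "cmod (CLINT x|lborel. F x * cnj (Gn n x - G x)) \<le> sqrt (nsq F * g n)"
      using CS[OF F(2) sG] unfolding g_def by (simp add: real_le_rsqrt)
    show ?thesis unfolding eq using c1 c2 norm_triangle_ineq[of "CLINT x|lborel. (Fn n x - F x) * cnj (Gn n x)" "CLINT x|lborel. F x * cnj (Gn n x - G x)"]
      by linarith
  qed
  have a0: "a \<longlonglongrightarrow> 0" using lF unfolding a_def[abs_def] .
  have g0: "g \<longlonglongrightarrow> 0" using lG unfolding g_def[abs_def] .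
  have "(\<lambda>n. sqrt (a n * (2 * g n + 2 * nsq G)) + sqrt (nsq F * g n)) \<longlonglongrightarrow> sqrt (0 * (2 * 0 + 2 * nsq G)) + sqrt (nsq F * 0)"
    by (intro tendsto_intros a0 g0)
  then have "(\<lambda>n. sqrt (a n * (2 * g n + 2 * nsq G)) + sqrt (nsq F * g n)) \<longlonglongrightarrow> 0" by simp
  then have "(\<lambda>n. (CLINT x|lborel. Fn n x * cnj (Gn n x)) - (CLINT x|lborel. F x * cnj (G x))) \<longlonglongrightarrow> 0"
    by (rule Lim_null_comparison[rotated]) (use bound in auto)
  then show ?thesis by (simp add: LIM_zero_iff)
qed

lemma trunc_int:
  assumes p: "sq_integrable p"
  shows "integrable lborel (\<lambda>\<tau>. indicator {l..r} \<tau> *\<^sub>R p \<tau>)"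
    and "sq_integrable (\<lambda>\<tau>. indicator {l..r} \<tau> *\<^sub>R p \<tau>)"
proof -
  have [measurable]: "p \<in> borel_measurable borel" using p by (simp add: sqi_meas)
  show "integrable lborel (\<lambda>\<tau>. indicator {l..r} \<tau> *\<^sub>R p \<tau>)"
  proof (rule Bochner_Integration.integrable_bound)
    show "integrable lborel (\<lambda>x. (cmod (p x))\<^sup>2 + indicator {l..r} x :: real)"
      using p emeasure_compact_finite[OF compact_Icc[of l r]] by (intro Bochner_Integration.integrable_add integrable_real_indicator) (auto simp: sq_integrable_def)
    show "(\<lambda>\<tau>. indicator {l..r} \<tau> *\<^sub>R p \<tau>) \<in> borel_measurable lborel" by measurable
    show "AE x in lborel. norm (indicator {l..r} x *\<^sub>R p x) \<le> norm ((cmod (p x))\<^sup>2 + indicator {l..r} x :: real)"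
    proof (rule AE_I2)
      fix x
      show "norm (indicator {l..r} x *\<^sub>R p x) \<le> norm ((cmod (p x))\<^sup>2 + indicator {l..r} x :: real)"
      proof (cases "cmod (p x) \<le> 1")
        case True
        have "cmod (p x) \<le> (cmod (p x))\<^sup>2 + 1" by (rule add_increasing[OF zero_le_power2 True])
        with True show ?thesis by (auto simp: indicator_def)
      next
        case False
        then have "cmod (p x) * 1 \<le> cmod (p x) * cmod (p x)" by (intro mult_left_mono) auto
        then have "cmod (p x) \<le> (cmod (p x))\<^sup>2" by (simp add: power2_eq_square)
        then show ?thesis by (auto simp: indicator_def)
      qed
    qed
  qed
  show "sq_integrable (\<lambda>\<tau>. indicator {l..r} \<tau> *\<^sub>R p \<tau>)"
    using sqi_bmult[OF p, of "\<lambda>\<tau>. complex_of_real (indicator {l..r} \<tau>)" 1]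
    by (simp add: scaleR_conv_of_real indicator_def)
qed

lemma lct_trunc_LT: "lct_trunc M h N = LT M (\<lambda>\<tau>. indicator {- real N..real N} \<tau> *\<^sub>R h \<tau>)"
  unfolding lct_trunc_def LT_def set_lebesgue_integral_def by (simp add: fun_eq_iff)

lemma nsq_ennreal:
  assumes "sq_integrable u" shows "(\<integral>\<^sup>+x. ennreal ((cmod (u x))\<^sup>2) \<partial>lborel) = ennreal (nsq u)"
  unfolding nsq_def using assms by (intro nn_integral_eq_integral) (auto simp: sq_integrable_def)

lemma is_LCT_lim:
  assumes "is_LCT M h F" "\<And>N. sq_integrable (lct_trunc M h N)"
  shows "(\<lambda>N. nsq (\<lambda>x. lct_trunc M h N x - F x)) \<longlonglongrightarrow> 0" and "sq_integrable F"
proof -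
  show sF: "sq_integrable F" using assms(1) by (simp add: is_LCT_def)
  have "(\<lambda>N. ennreal (nsq (\<lambda>x. lct_trunc M h N x - F x))) \<longlonglongrightarrow> 0"
    using assms(1) unfolding is_LCT_def
    by (simp add: nsq_ennreal[OF sqi_diff[OF assms(2) sF]])
  then have "(\<lambda>N. ennreal (nsq (\<lambda>x. lct_trunc M h N x - F x))) \<longlonglongrightarrow> ennreal 0" by simp
  then show "(\<lambda>N. nsq (\<lambda>x. lct_trunc M h N x - F x)) \<longlonglongrightarrow> 0"
    by (rule tendsto_ennrealD) (auto simp: nsq_nonneg)
qed

lemma iph_zero[simp]: "iph 0 = 1" unfolding iph_def by simp

lemma kernel_pair:
  "cnj (lct_kernel (a, b, c, d) t u) * lct_kernel (a, b, c, d) t \<xi>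
     = (kc b * cnj (kc b)) * iph (d / (2 * b) * \<xi>\<^sup>2 - d / (2 * b) * u\<^sup>2 + (u - \<xi>) * t / b)"
proof -
  have eq: "d / (2 * b) * \<xi>\<^sup>2 - d / (2 * b) * u\<^sup>2 + (u - \<xi>) * t / b =
     - (d / (2 * b) * u\<^sup>2) + (- (a / (2 * b) * t\<^sup>2) + (- (- (u / b * t)) + (d / (2 * b) * \<xi>\<^sup>2 + (a / (2 * b) * t\<^sup>2 + - (\<xi> / b * t)))))"
    by (simp add: algebra_simps add_divide_distrib diff_divide_distrib)
  have "iph (d / (2 * b) * \<xi>\<^sup>2 - d / (2 * b) * u\<^sup>2 + (u - \<xi>) * t / b) =
     iph (- (d / (2 * b) * u\<^sup>2)) * (iph (- (a / (2 * b) * t\<^sup>2)) * (iph (- (- (u / b * t))) * (iph (d / (2 * b) * \<xi>\<^sup>2) * (iph (a / (2 * b) * t\<^sup>2) * iph (- (\<xi> / b * t))))))"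
    by (simp only: eq iph_add)
  then show ?thesis unfolding kernel_eq complex_cnj_mult iph_cnj by (simp add: mult_ac)
qed

lemma csqrt_kc:
  assumes b: "b \<noteq> 0"
  shows "cnj (csqrt (- \<i> * 2 * complex_of_real pi * complex_of_real b)) * kc b = 1"
proof -
  have "- \<i> * 2 * complex_of_real pi * complex_of_real b \<notin> \<real>\<^sub>\<le>\<^sub>0"
    using b by (auto simp: complex_nonpos_Reals_iff)
  then have "cnj (csqrt (- \<i> * 2 * complex_of_real pi * complex_of_real b)) = csqrt (\<i> * 2 * complex_of_real pi * complex_of_real b)"
    by (simp add: cnj_csqrt)
  moreover have "csqrt (\<i> * 2 * complex_of_real pi * complex_of_real b) \<noteq> 0" using b by simp
  ultimately show ?thesis unfolding kc_def by simp
qed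

definition Gst :: "real \<Rightarrow> real \<Rightarrow> (real \<Rightarrow> complex) \<Rightarrow> lct_param \<Rightarrow> real \<Rightarrow> real \<Rightarrow> real \<Rightarrow> complex" where
  "Gst b d' \<Phi> A t u \<xi> = csqrt (- \<i> * 2 * complex_of_real pi * complex_of_real b) *
        exp (\<i> * complex_of_real (d' / (2 * b) * (\<xi> - u)\<^sup>2)) *
        cnj (\<Phi> (\<xi> - u)) *
        lct_kernel A t u * cnj (lct_kernel A t \<xi>)"

definition Th :: "real \<Rightarrow> real \<Rightarrow> real \<Rightarrow> real \<Rightarrow> real \<Rightarrow> real" where
  "Th b d t u \<xi> = d / (2 * b) * \<xi>\<^sup>2 - d / (2 * b) * u\<^sup>2 + (u - \<xi>) * t / b"

definition Mf :: "real \<Rightarrow> real \<Rightarrow> real \<Rightarrow> real \<Rightarrow> real \<Rightarrow> real \<Rightarrow> complex" where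
  "Mf b d d' t u \<xi> = cnj (csqrt (- \<i> * 2 * complex_of_real pi * complex_of_real b)) *
      iph (- (d' / (2 * b) * (\<xi> - u)\<^sup>2)) * ((kc b * cnj (kc b)) * iph (Th b d t u \<xi>))"

lemma Gst_cnj: "cnj (Gst b d' \<Phi> (a, b, c, d) t u \<xi>) = Mf b d d' t u \<xi> * \<Phi> (\<xi> - u)"
proof -
  have "cnj (Gst b d' \<Phi> (a, b, c, d) t u \<xi>) = cnj (csqrt (- \<i> * 2 * complex_of_real pi * complex_of_real b)) *
        iph (- (d' / (2 * b) * (\<xi> - u)\<^sup>2)) * \<Phi> (\<xi> - u) * (cnj (lct_kernel (a, b, c, d) t u) * lct_kernel (a, b, c, d) t \<xi>)"
    unfolding Gst_def by (simp add: exp_cnj iph_def mult_ac)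
  then show ?thesis unfolding kernel_pair Mf_def Th_def by (simp add: mult_ac)
qed

lemma Mf_norm:
  assumes "b \<noteq> 0"
  shows "cmod (Mf b d d' t u \<xi>) = sqrt (2 * pi * \<bar>b\<bar>) * (1 / (2 * pi * \<bar>b\<bar>))"
proof -
  have "cmod (kc b * cnj (kc b)) = 1 / (2 * pi * \<bar>b\<bar>)"
    using cmod_kc[OF assms] by (simp add: norm_mult power2_eq_square)
  then show ?thesis unfolding Mf_def by (simp add: norm_mult abs_mult)
qed

lemma Mf_meas[measurable]: "Mf b d d' t u \<in> borel_measurable borel"
  unfolding Mf_def Th_def by measurable

lemma H_T:
  assumes b: "b \<noteq> 0"
  shows "cnj (Gst b d' (LT (0, b, - 1 / b, d') gN) (a, b, c, d) t u \<xi>)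
     = (kc b * cnj (kc b)) * iph (Th b d t u \<xi>) * FT gN ((\<xi> - u) / b)"
proof -
  have T: "LT (0, b, - 1 / b, d') gN (\<xi> - u) = kc b * iph (d' / (2 * b) * (\<xi> - u)\<^sup>2) * FT gN ((\<xi> - u) / b)"
    unfolding LT_FT by simp
  have "iph (- (d' / (2 * b) * (\<xi> - u)\<^sup>2)) * iph (d' / (2 * b) * (\<xi> - u)\<^sup>2) = 1"
    using iph_mult_cnj[of "d' / (2 * b) * (\<xi> - u)\<^sup>2"] by (simp add: iph_cnj mult.commute)
  then show ?thesis
    unfolding Gst_cnj Mf_def T using csqrt_kc[OF b]
    by (simp add: mult_ac)
qed

lemma LT_h:
  "LT (a, b, c, d) (\<lambda>\<tau>. indicator {t - real N..t + real N} \<tau> *\<^sub>R (g (\<tau> - t) * cnj (lct_kernel (a, b, c, d) \<tau> u))) \<xi>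
     = (kc b * cnj (kc b)) * iph (Th b d t u \<xi>) * FT (\<lambda>s. indicator {- real N..real N} s *\<^sub>R g s) ((\<xi> - u) / b)"
proof -
  define kcc where "kcc = kc b * cnj (kc b)"
  define F where "F = (\<lambda>\<tau>. indicator {t - real N..t + real N} \<tau> *\<^sub>R (g (\<tau> - t) * (kcc * iph (d / (2 * b) * \<xi>\<^sup>2 - d / (2 * b) * u\<^sup>2 + (u - \<xi>) * \<tau> / b))))"
  have "LT (a, b, c, d) (\<lambda>\<tau>. indicator {t - real N..t + real N} \<tau> *\<^sub>R (g (\<tau> - t) * cnj (lct_kernel (a, b, c, d) \<tau> u))) \<xi>
      = (CLINT \<tau>|lborel. F \<tau>)"
    unfolding LT_def F_def
  proof (intro Bochner_Integration.integral_cong refl)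
    fix \<tau>
    show "indicator {t - real N..t + real N} \<tau> *\<^sub>R (g (\<tau> - t) * cnj (lct_kernel (a, b, c, d) \<tau> u)) * lct_kernel (a, b, c, d) \<tau> \<xi>
       = indicator {t - real N..t + real N} \<tau> *\<^sub>R (g (\<tau> - t) * (kcc * iph (d / (2 * b) * \<xi>\<^sup>2 - d / (2 * b) * u\<^sup>2 + (u - \<xi>) * \<tau> / b)))"
      using kernel_pair[of a b c d \<tau> u \<xi>] unfolding kcc_def by (simp add: mult.assoc)
  qed
  also have "\<dots> = (CLINT s|lborel. F (s + t))" by (rule lborel_shift_integral[symmetric])
  also have "\<dots> = (CLINT s|lborel. kcc * iph (Th b d t u \<xi>) * ((indicator {- real N..real N} s *\<^sub>R g s) * exp (- \<i> * complex_of_real ((\<xi> - u) / b * s))))"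
  proof (intro Bochner_Integration.integral_cong refl)
    fix s
    have i: "indicator {t - real N..t + real N} (s + t) = (indicator {- real N..real N} s :: real)"
      by (auto simp: indicator_def)
    have e: "d / (2 * b) * \<xi>\<^sup>2 - d / (2 * b) * u\<^sup>2 + (u - \<xi>) * (s + t) / b = Th b d t u \<xi> + - ((\<xi> - u) / b * s)"
      unfolding Th_def by (simp add: algebra_simps add_divide_distrib diff_divide_distrib)
    show "F (s + t) = kcc * iph (Th b d t u \<xi>) * ((indicator {- real N..real N} s *\<^sub>R g s) * exp (- \<i> * complex_of_real ((\<xi> - u) / b * s)))"
      unfolding F_def i e unfolding iph_add mexp_iph by (simp add: mult_ac)
  qed
  also have "\<dots> = kcc * iph (Th b d t u \<xi>) * FT (\<lambda>s. indicator {- real N..real N} s *\<^sub>R g s) ((\<xi> - u) / b)"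
    unfolding FT_def by (rule integral_mult_right_zero)
  finally show ?thesis unfolding kcc_def .
qed

lemma nsq_const_mult:
  assumes "\<And>x. cmod (m x) = \<kappa>"
  shows "nsq (\<lambda>x. m x * F x) = \<kappa>\<^sup>2 * nsq F"
  unfolding nsq_def by (simp add: norm_mult power_mult_distrib assms)

lemma kernel_norm: "cmod (lct_kernel (a, b, c, d) \<tau> \<xi>) = cmod (kc b)"
  unfolding kernel_eq by (simp add: norm_mult)

lemma kernel_meas[measurable]: "(\<lambda>\<tau>. lct_kernel (a, b, c, d) \<tau> \<xi>) \<in> borel_measurable borel"
  unfolding kernel_eq by measurable

theorem lemma1:
  fixes a b c d d' :: real and f g LAf LA1g :: "real \<Rightarrow> complex"
  assumes "a * d - b * c = 1" and "b \<noteq> 0"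
    and "sq_integrable f" and "sq_integrable g"
    and "is_LCT (a, b, c, d) f LAf"
    and "is_LCT (0, b, - 1 / b, d') g LA1g"
  shows "\<forall>t u. stlct (a, b, c, d) g f t u =
    (LINT \<xi>|lborel. LAf \<xi> *
       (csqrt (- \<i> * 2 * complex_of_real pi * complex_of_real b) *
        exp (\<i> * complex_of_real (d' / (2 * b) * (\<xi> - u)\<^sup>2)) *
        cnj (LA1g (\<xi> - u)) *
        lct_kernel (a, b, c, d) t u * cnj (lct_kernel (a, b, c, d) t \<xi>)))"
proof (intro allI)
  fix t u :: real
  have b: "b \<noteq> 0" by fact
  have sf: "sq_integrable f" and sg: "sq_integrable g" by fact+
  have [measurable]: "f \<in> borel_measurable borel" "g \<in> borel_measurable borel" using sf sg by (auto simp: sqi_meas)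
  define fN where "fN N = (\<lambda>s. indicator {- real N..real N} s *\<^sub>R f s)" for N :: nat
  define gN where "gN N = (\<lambda>s. indicator {- real N..real N} s *\<^sub>R g s)" for N :: nat
  define h where "h = (\<lambda>\<tau>. g (\<tau> - t) * cnj (lct_kernel (a, b, c, d) \<tau> u))"
  define hN where "hN N = (\<lambda>\<tau>. indicator {t - real N..t + real N} \<tau> *\<^sub>R h \<tau>)" for N :: nat
  have sh: "sq_integrable h"
    using sqi_bmult[OF sqi_shift'[OF sg, of t], of "\<lambda>\<tau>. cnj (lct_kernel (a, b, c, d) \<tau> u)" "cmod (kc b)"]
    unfolding h_def by (simp add: kernel_norm mult.commute)
  have fNi: "integrable lborel (fN N)" "sq_integrable (fN N)" for N
    unfolding fN_def using trunc_int[OF sf] by auto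
  have gNi: "integrable lborel (gN N)" "sq_integrable (gN N)" for N
    unfolding gN_def using trunc_int[OF sg] by auto
  have hNi: "integrable lborel (hN N)" "sq_integrable (hN N)" for N
    unfolding hN_def using trunc_int[OF sh] by auto
  have Tf: "lct_trunc (a, b, c, d) f N = LT (a, b, c, d) (fN N)" for N
    unfolding lct_trunc_LT fN_def ..
  have Tg: "lct_trunc (0, b, - 1 / b, d') g N = LT (0, b, - 1 / b, d') (gN N)" for N
    unfolding lct_trunc_LT gN_def ..
  have sTf: "sq_integrable (LT (a, b, c, d) (fN N))" for N by (rule LT_sq[OF b fNi])
  have sTg: "sq_integrable (LT (0, b, - 1 / b, d') (gN N))" for N by (rule LT_sq[OF b gNi])
  have limf: "(\<lambda>N. nsq (\<lambda>x. LT (a, b, c, d) (fN N) x - LAf x)) \<longlonglongrightarrow> 0" and sLAf: "sq_integrable LAf"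
    using is_LCT_lim[OF assms(5)] sTf unfolding Tf by auto
  have limg: "(\<lambda>N. nsq (\<lambda>x. LT (0, b, - 1 / b, d') (gN N) x - LA1g x)) \<longlonglongrightarrow> 0" and sLA1g: "sq_integrable LA1g"
    using is_LCT_lim[OF assms(6)] sTg unfolding Tg by auto
  define H where "H \<Phi> = (\<lambda>\<xi>. cnj (Gst b d' \<Phi> (a, b, c, d) t u \<xi>))" for \<Phi>
  define \<kappa> where "\<kappa> = sqrt (2 * pi * \<bar>b\<bar>) * (1 / (2 * pi * \<bar>b\<bar>))"
  have Hm: "H \<Phi> = (\<lambda>\<xi>. Mf b d d' t u \<xi> * \<Phi> (\<xi> - u))" for \<Phi>
    unfolding H_def Gst_cnj ..
  have sH: "sq_integrable (H \<Phi>)" if "sq_integrable \<Phi>" for \<Phi>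
    unfolding Hm using sqi_bmult[OF sqi_shift'[OF that, of u], of "Mf b d d' t u" \<kappa>]
    by (simp add: Mf_norm[OF b] \<kappa>_def)
  have HT: "H (LT (0, b, - 1 / b, d') (gN N)) = LT (a, b, c, d) (hN N)" for N
  proof
    fix \<xi>
    show "H (LT (0, b, - 1 / b, d') (gN N)) \<xi> = LT (a, b, c, d) (hN N) \<xi>"
      unfolding H_def H_T[OF b] hN_def h_def LT_h gN_def ..
  qed
  have limH: "(\<lambda>N. nsq (\<lambda>x. H (LT (0, b, - 1 / b, d') (gN N)) x - H LA1g x)) \<longlonglongrightarrow> 0"
  proof -
    have "nsq (\<lambda>x. H (LT (0, b, - 1 / b, d') (gN N)) x - H LA1g x)
        = \<kappa>\<^sup>2 * nsq (\<lambda>x. LT (0, b, - 1 / b, d') (gN N) x - LA1g x)" for N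
    proof -
      have "nsq (\<lambda>x. H (LT (0, b, - 1 / b, d') (gN N)) x - H LA1g x)
          = nsq (\<lambda>x. Mf b d d' t u x * (LT (0, b, - 1 / b, d') (gN N) (x - u) - LA1g (x - u)))"
        unfolding Hm by (simp add: algebra_simps)
      also have "\<dots> = \<kappa>\<^sup>2 * nsq (\<lambda>x. LT (0, b, - 1 / b, d') (gN N) (x - u) - LA1g (x - u))"
        by (rule nsq_const_mult) (simp add: Mf_norm[OF b] \<kappa>_def)
      also have "\<dots> = \<kappa>\<^sup>2 * nsq (\<lambda>x. LT (0, b, - 1 / b, d') (gN N) x - LA1g x)"
        using nsq_shift'[of "\<lambda>x. LT (0, b, - 1 / b, d') (gN N) x - LA1g x" u] by simp
      finally show ?thesis .
    qed
    moreover have "(\<lambda>N. \<kappa>\<^sup>2 * nsq (\<lambda>x. LT (0, b, - 1 / b, d') (gN N) x - LA1g x)) \<longlonglongrightarrow> \<kappa>\<^sup>2 * 0"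
      by (intro tendsto_intros limg)
    ultimately show ?thesis by simp
  qed
  have L1: "(\<lambda>N. CLINT x|lborel. LT (a, b, c, d) (fN N) x * cnj (LT (a, b, c, d) (hN N) x))
      \<longlonglongrightarrow> (CLINT x|lborel. LAf x * cnj (H LA1g x))"
    using ip_lim[of "\<lambda>N. LT (a, b, c, d) (fN N)" LAf "\<lambda>N. H (LT (0, b, - 1 / b, d') (gN N))" "H LA1g",
        OF sTf sLAf sH[OF sTg] sH[OF sLA1g] limf limH]
    unfolding HT .
  have P: "(CLINT x|lborel. LT (a, b, c, d) (fN N) x * cnj (LT (a, b, c, d) (hN N) x))
      = (CLINT x|lborel. fN N x * cnj (hN N x))" for N
    by (rule LT_parseval[OF b fNi hNi])
  have L2: "(\<lambda>N. CLINT x|lborel. fN N x * cnj (hN N x)) \<longlonglongrightarrow> (CLINT x|lborel. f x * cnj (h x))"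
  proof (rule Bochner_Integration.integral_dominated_convergence[where w = "\<lambda>x. cmod (f x) * cmod (h x)"])
    have [measurable]: "h \<in> borel_measurable borel" using sh by (simp add: sqi_meas)
    show "(\<lambda>x. f x * cnj (h x)) \<in> borel_measurable lborel" by measurable
    show "(\<lambda>x. fN N x * cnj (hN N x)) \<in> borel_measurable lborel" for N
      unfolding fN_def hN_def by measurable
    show "integrable lborel (\<lambda>x. cmod (f x) * cmod (h x))" by (rule sqi_abs_prod_int[OF sf sh])
    show "AE x in lborel. norm (fN N x * cnj (hN N x)) \<le> cmod (f x) * cmod (h x)" for N
      by (intro AE_I2) (auto simp: fN_def hN_def norm_mult indicator_def)
    show "AE x in lborel. (\<lambda>N. fN N x * cnj (hN N x)) \<longlonglongrightarrow> f x * cnj (h x)"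
    proof (rule AE_I2, rule tendsto_eventually)
      fix x :: real
      obtain M :: nat where M: "\<bar>x\<bar> + \<bar>t\<bar> \<le> real M" using real_arch_simple by blast
      show "\<forall>\<^sub>F N in sequentially. fN N x * cnj (hN N x) = f x * cnj (h x)"
        unfolding eventually_sequentially
      proof (intro exI[of _ M] allI impI)
        fix N assume "M \<le> N"
        then have "real M \<le> real N" by simp
        with M have "x \<in> {- real N..real N}" "x \<in> {t - real N..t + real N}" by auto
        then show "fN N x * cnj (hN N x) = f x * cnj (h x)" unfolding fN_def hN_def by simp
      qed
    qed
  qed
  have E: "(CLINT x|lborel. f x * cnj (h x)) = (CLINT x|lborel. LAf x * cnj (H LA1g x))"
    using LIMSEQ_unique[OF L2] L1 unfolding P by blast
  have "stlct (a, b, c, d) g f t u = (CLINT x|lborel. f x * cnj (h x))"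
    unfolding stlct_def h_def by (simp add: mult.assoc)
  also have "\<dots> = (CLINT x|lborel. LAf x * cnj (H LA1g x))" by (rule E)
  also have "\<dots> = (LINT \<xi>|lborel. LAf \<xi> *
       (csqrt (- \<i> * 2 * complex_of_real pi * complex_of_real b) *
        exp (\<i> * complex_of_real (d' / (2 * b) * (\<xi> - u)\<^sup>2)) *
        cnj (LA1g (\<xi> - u)) *
        lct_kernel (a, b, c, d) t u * cnj (lct_kernel (a, b, c, d) t \<xi>)))"
    unfolding H_def Gst_def by simp
  finally show "stlct (a, b, c, d) g f t u = (LINT \<xi>|lborel. LAf \<xi> *
       (csqrt (- \<i> * 2 * complex_of_real pi * complex_of_real b) *
        exp (\<i> * complex_of_real (d' / (2 * b) * (\<xi> - u)\<^sup>2)) *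
        cnj (LA1g (\<xi> - u)) *
        lct_kernel (a, b, c, d) t u * cnj (lct_kernel (a, b, c, d) t \<xi>)))" .
qed

end
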